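(* Let $X$ be an $\mathbb R^d$-valued semimartingale on a filtered probability space with right-continuous filtration, and let $n\in\mathbb N^*$. The following statements are equivalent: (i) $X$ is a polynomial process of order $n$; (ii) for each $m\in\{1,\dots,n\}$ the vector-valued process $(X^\lambda)_{\lambda\in\mathbb N^d_m\setminus\{0\}}$ is a polynomial process of order 1; (iii) for each $m\in\{1,\dots,n\}$ the $\mathbb R^{(1+d)^m}$-valued process $(1,X)^{\otimes m}$ is a polynomial process of order 1, where $\otimes m$ denotes the $m$-fold Kronecker product of a vector.
   Context: Fix a filtered probability space $(\Omega,\mathscr F,(\mathscr F_t)_{t\ge0},\mathbb P)$ with right-continuous filtration. Notation: $\mathbb N=\{0,1,\dots\}$, $\mathbb N^*=\mathbb N\setminus\{0\}$; for $x\in\mathbb R^d$, $\lambda\in\mathbb N^d$: $x^\lambda=\prod_{j=1}^dx_j^{\lambda_j}$, $|\lambda|=\sum_j\lambda_j$, $\mathbb N^d_n=\{\lambda\in\mathbb N^d:|\lambda|\le n\}$; vectors indexed by sets of multiindices use a fixed ordering. An $\mathbb R^d$-valued semimartingale $X$ is a (time-inhomogeneous) polynomial process of order $n\in\mathbb N$ if $\int_0^t\mathbb E(\|X(s)\|^n)\,ds<\infty$ for all $t\ge0$ and, for every $\lambda\in\mathbb N^d_n$, there are deterministic, measurable, locally bounded functions $b^c_{\lambda,\mu}:\mathbb R_+\to\mathbb R$, $\mu\in\mathbb N^d_{|\lambda|}$, such that $X(t)^\lambda-X(0)^\lambda-\int_0^t\sum_{\mu\in\mathbb N^d_{|\lambda|}}b^c_{\lambda,\mu}(s)X(s)^\mu\,ds,\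 t\ge0,$ is a martingale (i.e. $x\mapsto x^\lambda$ lies in the domain of the extended generator $\widetilde G$ of $X$ and $\widetilde G_sx^\lambda=\sum_\mu b^c_{\lambda,\mu}(s)x^\mu$). It is time-homogeneous if the $b^c_{\lambda,\mu}$ do not depend on $t$. A vector-valued process is polynomial of order 1 in this sense exactly when its first moments are locally integrable in time and it has the form $dV(t)=(a^c(t)+A^c(t)V(t))dt+dM(t)$ with deterministic locally bounded $a^c,A^c$ and a martingale $M$. *)

theory Defs
  imports "HOL-Probability.Probability"
begin

definition rc_filtration :: "'a measure \<Rightarrow> (real \<Rightarrow> 'a measure) \<Rightarrow> bool" where
  "rc_filtration M F \<longleftrightarrow>
     prob_space M \<and>
     (\<forall>t\<ge>0. subalgebra M (F t)) \<and>
     (\<forall>s t. 0 \<le> s \<longrightarrow> s \<le> t \<longrightarrow> sets (F s) \<subseteq> sets (F t)) \<and>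
     (\<forall>t\<ge>0. sets (F t) = (\<Inter>s\<in>{t<..}. sets (F s)))"

definition adapted :: "'a measure \<Rightarrow> (real \<Rightarrow> 'a measure) \<Rightarrow> (real \<Rightarrow> 'a \<Rightarrow> real) \<Rightarrow> bool" where
  "adapted M F X \<longleftrightarrow> (\<forall>t\<ge>0. X t \<in> borel_measurable (F t))"

definition martingale :: "'a measure \<Rightarrow> (real \<Rightarrow> 'a measure) \<Rightarrow> (real \<Rightarrow> 'a \<Rightarrow> real) \<Rightarrow> bool" where
  "martingale M F X \<longleftrightarrow>
     adapted M F X \<and> (\<forall>t\<ge>0. integrable M (X t)) \<and>
     (\<forall>s t. 0 \<le> s \<longrightarrow> s \<le> t \<longrightarrow> (AE \<omega> in M. real_cond_exp M (F s) (X t) \<omega> = X s \<omega>))"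

definition stopping_time_on :: "'a measure \<Rightarrow> (real \<Rightarrow> 'a measure) \<Rightarrow> ('a \<Rightarrow> real) \<Rightarrow> bool" where
  "stopping_time_on M F \<tau> \<longleftrightarrow>
     (\<forall>\<omega>\<in>space M. 0 \<le> \<tau> \<omega>) \<and> (\<forall>t\<ge>0. {\<omega>\<in>space M. \<tau> \<omega> \<le> t} \<in> sets (F t))"

definition local_martingale :: "'a measure \<Rightarrow> (real \<Rightarrow> 'a measure) \<Rightarrow> (real \<Rightarrow> 'a \<Rightarrow> real) \<Rightarrow> bool" where
  "local_martingale M F X \<longleftrightarrow>
     (\<exists>\<tau> :: nat \<Rightarrow> 'a \<Rightarrow> real.
        (\<forall>k. stopping_time_on M F (\<tau> k)) \<and>
        (AE \<omega> in M. mono (\<lambda>k. \<tau> k \<omega>) \<and> filterlim (\<lambda>k. \<tau> k \<omega>) at_top sequentially) \<and>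
        (\<forall>k. martingale M F (\<lambda>t \<omega>. X (min t (\<tau> k \<omega>)) \<omega>)))"

definition cadlag :: "(real \<Rightarrow> real) \<Rightarrow> bool" where
  "cadlag f \<longleftrightarrow> (\<forall>t\<ge>0. continuous (at_right t) f \<and> (0 < t \<longrightarrow> (\<exists>l. (f \<longlongrightarrow> l) (at_left t))))"

definition bounded_variation_on :: "real \<Rightarrow> real \<Rightarrow> (real \<Rightarrow> real) \<Rightarrow> bool" where
  "bounded_variation_on a b f \<longleftrightarrow>
     (\<exists>C. \<forall>(p :: nat \<Rightarrow> real) N. p 0 = a \<longrightarrow> p N = b \<longrightarrow> (\<forall>k<N. p k \<le> p (Suc k)) \<longrightarrow>
          (\<Sum>k<N. \<bar>f (p (Suc k)) - f (p k)\<bar>) \<le> C)"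

definition semimartingale :: "'a measure \<Rightarrow> (real \<Rightarrow> 'a measure) \<Rightarrow> (real \<Rightarrow> 'a \<Rightarrow> real) \<Rightarrow> bool" where
  "semimartingale M F X \<longleftrightarrow>
     adapted M F X \<and> (\<forall>\<omega>\<in>space M. cadlag (\<lambda>t. X t \<omega>)) \<and>
     (\<exists>L A. local_martingale M F L \<and> adapted M F A \<and>
        (\<forall>\<omega>\<in>space M. L 0 \<omega> = 0 \<and> A 0 \<omega> = 0 \<and> cadlag (\<lambda>t. A t \<omega>) \<and>
                       (\<forall>t\<ge>0. bounded_variation_on 0 t (\<lambda>s. A s \<omega>))) \<and>
        (\<forall>t\<ge>0. \<forall>\<omega>\<in>space M. X t \<omega> = X 0 \<omega> + L t \<omega> + A t \<omega>))"

definition vsemimartingale :: "'a measure \<Rightarrow> (real \<Rightarrow> 'a measure) \<Rightarrow> 'i set \<Rightarrow> (real \<Rightarrow> 'a \<Rightarrow> 'i \<Rightarrow> real) \<Rightarrow> bool" where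
  "vsemimartingale M F I X \<longleftrightarrow> (\<forall>i\<in>I. semimartingale M F (\<lambda>t \<omega>. X t \<omega> i))"

definition vnorm :: "'i set \<Rightarrow> ('i \<Rightarrow> real) \<Rightarrow> real" where
  "vnorm I x = sqrt (\<Sum>i\<in>I. (x i)^2)"

definition multi_le :: "'i set \<Rightarrow> nat \<Rightarrow> ('i \<Rightarrow> nat) set" where
  "multi_le I n = {l. (\<forall>i. i \<notin> I \<longrightarrow> l i = 0) \<and> (\<Sum>i\<in>I. l i) \<le> n}"

definition deg :: "'i set \<Rightarrow> ('i \<Rightarrow> nat) \<Rightarrow> nat" where
  "deg I l = (\<Sum>i\<in>I. l i)"

definition mpow :: "'i set \<Rightarrow> ('i \<Rightarrow> nat) \<Rightarrow> ('i \<Rightarrow> real) \<Rightarrow> real" where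
  "mpow I l x = (\<Prod>i\<in>I. x i ^ l i)"

definition locally_bounded :: "(real \<Rightarrow> real) \<Rightarrow> bool" where
  "locally_bounded b \<longleftrightarrow> (\<forall>t\<ge>0. \<exists>C. \<forall>s\<in>{0..t}. \<bar>b s\<bar> \<le> C)"

definition polynomial_process ::
  "'a measure \<Rightarrow> (real \<Rightarrow> 'a measure) \<Rightarrow> 'i set \<Rightarrow> nat \<Rightarrow> (real \<Rightarrow> 'a \<Rightarrow> 'i \<Rightarrow> real) \<Rightarrow> bool" where
  "polynomial_process M F I n X \<longleftrightarrow>
     vsemimartingale M F I X \<and>
     (\<forall>t\<ge>0. (\<integral>\<^sup>+ s\<in>{0..t}. (\<integral>\<^sup>+ \<omega>. ennreal (vnorm I (X s \<omega>) ^ n) \<partial>M) \<partial>lborel) < \<infinity>) \<and>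
     (\<forall>l\<in>multi_le I n. \<exists>b :: ('i \<Rightarrow> nat) \<Rightarrow> real \<Rightarrow> real.
        (\<forall>\<mu>\<in>multi_le I (deg I l). b \<mu> \<in> borel_measurable borel \<and> locally_bounded (b \<mu>)) \<and>
        martingale M F (\<lambda>t \<omega>. mpow I l (X t \<omega>) - mpow I l (X 0 \<omega>)
            - (LINT s:{0..t}|lborel. (\<Sum>\<mu>\<in>multi_le I (deg I l). b \<mu> s * mpow I \<mu> (X s \<omega>)))))"

text \<open>The vector (1,x) for x indexed by {..<d}, indexed by {0..d}; and its m-fold Kronecker
  power, indexed by words js of length m over {0..d} (component = product of the entries).\<close>
definition one_ext :: "(nat \<Rightarrow> real) \<Rightarrow> nat \<Rightarrow> real" where
  "one_ext x j = (if j = 0 then 1 else x (j - 1))"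

definition kron_index :: "nat \<Rightarrow> nat \<Rightarrow> nat list set" where
  "kron_index d m = {js. length js = m \<and> set js \<subseteq> {..d}}"

definition kron_pow :: "(nat \<Rightarrow> real) \<Rightarrow> nat list \<Rightarrow> real" where
  "kron_pow y js = prod_list (map y js)"

end

theory Submission
  imports Defs
begin

lemma nn_integral_cmult_le:
  fixes c :: ennreal
  assumes "c < top"
  shows "(\<integral>\<^sup>+x. c * f x \<partial>M) \<le> c * (\<integral>\<^sup>+x. f x \<partial>M)"
proof (cases "c = 0")
  case True then show ?thesis by simp
next
  case False
  show ?thesis
    unfolding nn_integral_def
  proof (rule SUP_least)
    fix u assume u: "u \<in> {g. simple_function M g \<and> g \<le> (\<lambda>x. c * f x)}"
    define v where "v = (\<lambda>x. u x / c)"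
    have sv: "simple_function M v" using u unfolding v_def
      by (auto intro!: simple_function_compose1[where g="\<lambda>y. y / c"])
    have "v \<le> f" using u False assms unfolding v_def le_fun_def
      by (auto intro!: divide_le_posI_ennreal simp: zero_less_iff_neq_zero)
    have uv: "u = (\<lambda>x. c * v x)" unfolding v_def
    proof
      fix x show "u x = c * (u x / c)" using False assms
        by (metis ennreal_times_divide mult.commute mult_divide_eq_ennreal top.not_eq_extremum)
    qed
    have "integral\<^sup>S M u = c * integral\<^sup>S M v" using sv uv by simp
    also have "\<dots> \<le> c * (SUP g \<in> {g. simple_function M g \<and> g \<le> f}. integral\<^sup>S M g)"
      using sv \<open>v \<le> f\<close> by (intro mult_left_mono SUP_upper) auto
    finally show "integral\<^sup>S M u \<le> c * (SUP g \<in> {g. simple_function M g \<and> g \<le> f}. integral\<^sup>S M g)" .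
  qed
qed

lemma nn_integral_add_simple_le:
  assumes h: "simple_function M h" and fin: "\<And>x. h x < top"
  shows "(\<integral>\<^sup>+x. h x + f x \<partial>M) \<le> (\<integral>\<^sup>+x. h x \<partial>M) + (\<integral>\<^sup>+x. f x \<partial>M)"
proof -
  show ?thesis
    unfolding nn_integral_def[of M "\<lambda>x. h x + f x"]
  proof (rule SUP_least)
    fix u assume u: "u \<in> {g. simple_function M g \<and> g \<le> (\<lambda>x. h x + f x)}"
    define v where "v = (\<lambda>x. u x - h x)"
    have sv: "simple_function M v" using u h unfolding v_def
      by (auto intro!: simple_function_compose2[where h="(-)"])
    have "v \<le> f" using u fin unfolding v_def le_fun_def
      by (auto simp: ennreal_minus_le_iff) (metis fin less_irrefl)
    have "integral\<^sup>S M u \<le> integral\<^sup>S M (\<lambda>x. v x + h x)"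
    proof (rule simple_integral_mono)
      show "simple_function M u" using u by auto
      show "simple_function M (\<lambda>x. v x + h x)" using sv h by (rule simple_function_add)
      fix x show "u x \<le> v x + h x" unfolding v_def by (simp add: diff_add_self_ennreal not_le less_imp_le)
    qed
    also have "\<dots> = integral\<^sup>S M v + integral\<^sup>S M h" using sv h by (simp add: simple_integral_add)
    also have "\<dots> \<le> (\<integral>\<^sup>+x. f x \<partial>M) + (\<integral>\<^sup>+x. h x \<partial>M)"
    proof (intro add_mono)
      show "integral\<^sup>S M v \<le> (\<integral>\<^sup>+x. f x \<partial>M)"
        unfolding nn_integral_def using sv \<open>v \<le> f\<close> by (intro SUP_upper) auto
      show "integral\<^sup>S M h \<le> (\<integral>\<^sup>+x. h x \<partial>M)"
        using nn_integral_eq_simple_integral[OF h] by simp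
    qed
    finally show "integral\<^sup>S M u \<le> (\<integral>\<^sup>+x. h x \<partial>M) + (\<integral>\<^sup>+x. f x \<partial>M)"
      by (simp add: add.commute)
  qed
qed

lemma cadlag_local_bound:
  assumes "cadlag f" "0 \<le> s"
  shows "\<exists>d>0. \<exists>C. \<forall>u\<ge>0. \<bar>u - s\<bar> < d \<longrightarrow> \<bar>f u\<bar> \<le> C"
proof -
  have rc: "(f \<longlongrightarrow> f s) (at_right s)" using assms unfolding cadlag_def
    by (simp add: continuous_within)
  have "eventually (\<lambda>u. dist (f u) (f s) < 1) (at_right s)"
    using tendstoD[OF rc, of 1] by simp
  then obtain br where br: "br > s" "\<And>y. y > s \<Longrightarrow> y < br \<Longrightarrow> dist (f y) (f s) < 1"
    unfolding eventually_at_right_field by blast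
  show ?thesis
  proof (cases "s = 0")
    case True
    have "\<forall>u\<ge>0. \<bar>u - s\<bar> < br - s \<longrightarrow> \<bar>f u\<bar> \<le> \<bar>f s\<bar> + 1"
    proof (intro allI impI)
      fix u :: real assume u: "0 \<le> u" "\<bar>u - s\<bar> < br - s"
      show "\<bar>f u\<bar> \<le> \<bar>f s\<bar> + 1"
      proof (cases "u = s")
        case False
        then have "u > s" "u < br" using u True by auto
        then have "dist (f u) (f s) < 1" by (rule br(2))
        then show ?thesis by (simp add: dist_real_def)
      qed simp
    qed
    moreover have "0 < br - s" using br by simp
    ultimately show ?thesis by blast
  next
    case False
    then have "0 < s" using assms by simp
    then obtain l where l: "(f \<longlongrightarrow> l) (at_left s)" using assms unfolding cadlag_def by blast
    have "eventually (\<lambda>u. dist (f u) l < 1) (at_left s)"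
      using tendstoD[OF l, of 1] by simp
    then obtain bl where bl: "bl < s" "\<And>y. y > bl \<Longrightarrow> y < s \<Longrightarrow> dist (f y) l < 1"
      unfolding eventually_at_left_field by blast
    have "\<forall>u\<ge>0. \<bar>u - s\<bar> < min (br - s) (s - bl) \<longrightarrow> \<bar>f u\<bar> \<le> max (\<bar>f s\<bar> + 1) (\<bar>l\<bar> + 1)"
    proof (intro allI impI)
      fix u :: real assume u: "0 \<le> u" "\<bar>u - s\<bar> < min (br - s) (s - bl)"
      show "\<bar>f u\<bar> \<le> max (\<bar>f s\<bar> + 1) (\<bar>l\<bar> + 1)"
      proof (cases "u = s")
        case False
        show ?thesis
        proof (cases "u > s")
          case True
          moreover have "u < br" using u by auto
          ultimately have "dist (f u) (f s) < 1" by (rule br(2))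
          then show ?thesis by (simp add: dist_real_def)
        next
          case False
          then have "u < s" using \<open>u \<noteq> s\<close> by simp
          moreover have "u > bl" using u by auto
          ultimately have "dist (f u) l < 1" using bl(2) by blast
          then show ?thesis by (simp add: dist_real_def)
        qed
      qed simp
    qed
    moreover have "0 < min (br - s) (s - bl)" using br bl by simp
    ultimately show ?thesis by blast
  qed
qed

lemma cadlag_bounded:
  assumes "cadlag f" "0 \<le> T"
  shows "\<exists>C. \<forall>s\<in>{0..T}. \<bar>f s\<bar> \<le> C"
proof -
  have "\<forall>s\<in>{0..T}. \<exists>d>0. \<exists>C. \<forall>u\<ge>0. \<bar>u - s\<bar> < d \<longrightarrow> \<bar>f u\<bar> \<le> C"
    using cadlag_local_bound[OF assms(1)] by auto
  then obtain d C where dC: "\<And>s. s \<in> {0..T} \<Longrightarrow> d s > 0"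
    "\<And>s u. s \<in> {0..T} \<Longrightarrow> u \<ge> 0 \<Longrightarrow> \<bar>u - s\<bar> < d s \<Longrightarrow> \<bar>f u\<bar> \<le> C s"
    by metis
  have cov: "{0..T} \<subseteq> (\<Union>s\<in>{0..T}. ball s (d s))"
  proof
    fix x assume "x \<in> {0..T}"
    then have "x \<in> ball x (d x)" using dC(1) by simp
    then show "x \<in> (\<Union>s\<in>{0..T}. ball s (d s))" using \<open>x \<in> {0..T}\<close> by blast
  qed
  obtain D where D: "D \<subseteq> {0..T}" "finite D" "{0..T} \<subseteq> (\<Union>s\<in>D. ball s (d s))"
    by (rule compactE_image[where S="{0..T}" and C="{0..T}" and f="\<lambda>s. ball s (d s)"]) (use cov in auto)
  show ?thesis
  proof (intro exI[of _ "\<Sum>s\<in>D. \<bar>C s\<bar>"] ballI)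
    fix u assume u: "u \<in> {0..T}"
    then obtain s where s: "s \<in> D" "u \<in> ball s (d s)" using D by blast
    have "\<bar>f u\<bar> \<le> C s" using s D u by (intro dC(2)) (auto simp: dist_real_def)
    also have "\<dots> \<le> \<bar>C s\<bar>" by simp
    also have "\<dots> \<le> (\<Sum>s\<in>D. \<bar>C s\<bar>)" using s D by (intro member_le_sum) auto
    finally show "\<bar>f u\<bar> \<le> (\<Sum>s\<in>D. \<bar>C s\<bar>)" .
  qed
qed

lemma right_cont_measurable:
  fixes g :: "real \<Rightarrow> real"
  assumes rc: "\<And>s. continuous (at_right s) g"
  shows "g \<in> borel_measurable borel"
proof (rule borel_measurable_LIMSEQ_real)
  define x where "x = (\<lambda>(k::nat) (s::real). (of_int \<lfloor>real (Suc k) * s\<rfloor> + 1) / real (Suc k))"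
  show "\<And>s. (\<lambda>k. g (x k s)) \<longlonglongrightarrow> g s"
  proof -
    fix s :: real
    have lo: "s < x k s" for k
    proof -
      have "real (Suc k) * s < of_int \<lfloor>real (Suc k) * s\<rfloor> + 1" by linarith
      then show ?thesis unfolding x_def by (simp add: field_simps)
    qed
    have hi: "x k s \<le> s + inverse (real (Suc k))" for k
    proof -
      have "of_int \<lfloor>real (Suc k) * s\<rfloor> + 1 \<le> real (Suc k) * s + 1" by linarith
      then have "x k s \<le> (real (Suc k) * s + 1) / real (Suc k)"
        unfolding x_def by (intro divide_right_mono) auto
      also have "\<dots> = s + inverse (real (Suc k))" by (simp add: field_simps)
      finally show ?thesis .
    qed
    have lim: "(\<lambda>k. s + inverse (real (Suc k))) \<longlonglongrightarrow> s + 0"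
      by (intro tendsto_add tendsto_const LIMSEQ_inverse_real_of_nat)
    have "(\<lambda>k. x k s) \<longlonglongrightarrow> s"
    proof (rule tendsto_sandwich[of "\<lambda>_. s" _ _ "\<lambda>k. s + inverse (real (Suc k))"])
      show "eventually (\<lambda>k. s \<le> x k s) sequentially" using lo by (simp add: less_imp_le)
      show "eventually (\<lambda>k. x k s \<le> s + inverse (real (Suc k))) sequentially" using hi by simp
      show "(\<lambda>k. s + inverse (real (Suc k))) \<longlonglongrightarrow> s" using lim by simp
    qed simp
    then have "filterlim (\<lambda>k. x k s) (at_right s) sequentially"
      using lo unfolding filterlim_at by (auto intro!: always_eventually simp: less_imp_neq[symmetric])
    moreover have "(g \<longlongrightarrow> g s) (at_right s)" using rc[of s] by (simp add: continuous_within)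
    ultimately show "(\<lambda>k. g (x k s)) \<longlonglongrightarrow> g s"
      by (rule filterlim_compose[rotated])
  qed
  fix k
  have "(\<lambda>s. (\<lambda>i::int. g ((of_int i + 1) / real (Suc k))) (\<lfloor>real (Suc k) * s\<rfloor>)) \<in> borel_measurable borel"
  proof -
    have fl: "(\<lambda>s. \<lfloor>real (Suc k) * s\<rfloor>) \<in> measurable borel (count_space UNIV)"
      by (rule measurable_compose[OF _ measurable_real_floor]) simp
    show ?thesis by (rule measurable_compose_countable'[OF _ fl]) simp_all
  qed
  then show "(\<lambda>s. g (x k s)) \<in> borel_measurable borel" unfolding x_def by simp
qed

lemma cadlag_max0_right_cont:
  assumes "cadlag f"
  shows "continuous (at_right s) (\<lambda>s. f (max 0 s))"
proof (cases "s < 0")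
  case True
  have "eventually (\<lambda>u. f (max 0 u) = f 0) (at_right s)"
    unfolding eventually_at_right_field using True by (intro exI[of _ 0]) auto
  then have "((\<lambda>s. f (max 0 s)) \<longlongrightarrow> f 0) (at_right s)"
    by (rule tendsto_eventually[OF eventually_mono]) auto
  then show ?thesis using True by (simp add: continuous_within)
next
  case False
  then have "(f \<longlongrightarrow> f s) (at_right s)" using assms unfolding cadlag_def
    by (simp add: continuous_within)
  moreover have "eventually (\<lambda>u. f u = f (max 0 u)) (at_right s)"
    unfolding eventually_at_right_field using False by (intro exI[of _ "s+1"]) auto
  ultimately have "((\<lambda>s. f (max 0 s)) \<longlongrightarrow> f s) (at_right s)"
    by (rule Lim_transform_eventually)
  then show ?thesis using False by (simp add: continuous_within)
qed

lemma cadlag_const: "cadlag (\<lambda>_. c)"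
  unfolding cadlag_def by auto

lemma cadlag_mult:
  assumes "cadlag f" "cadlag g"
  shows "cadlag (\<lambda>t. f t * g t)"
  unfolding cadlag_def
proof (intro allI impI conjI)
  fix t :: real assume t: "0 \<le> t"
  show "continuous (at_right t) (\<lambda>t. f t * g t)"
    using assms t unfolding cadlag_def by (intro continuous_mult') auto
  assume "0 < t"
  then obtain l1 l2 where "(f \<longlongrightarrow> l1) (at_left t)" "(g \<longlongrightarrow> l2) (at_left t)"
    using assms t unfolding cadlag_def by blast
  then show "\<exists>l. ((\<lambda>t. f t * g t) \<longlongrightarrow> l) (at_left t)" by (blast intro: tendsto_mult)
qed

lemma cadlag_add:
  assumes "cadlag f" "cadlag g"
  shows "cadlag (\<lambda>t. f t + g t)"
  unfolding cadlag_def
proof (intro allI impI conjI)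
  fix t :: real assume t: "0 \<le> t"
  show "continuous (at_right t) (\<lambda>t. f t + g t)"
    using assms t unfolding cadlag_def by (intro continuous_add) auto
  assume "0 < t"
  then obtain l1 l2 where "(f \<longlongrightarrow> l1) (at_left t)" "(g \<longlongrightarrow> l2) (at_left t)"
    using assms t unfolding cadlag_def by blast
  then show "\<exists>l. ((\<lambda>t. f t + g t) \<longlongrightarrow> l) (at_left t)" by (blast intro: tendsto_add)
qed

lemma cadlag_power: "cadlag f \<Longrightarrow> cadlag (\<lambda>t. f t ^ k)"
  by (induction k) (auto intro: cadlag_mult cadlag_const)

lemma cadlag_prod: "(\<And>i. i \<in> I \<Longrightarrow> cadlag (f i)) \<Longrightarrow> cadlag (\<lambda>t. \<Prod>i\<in>I. f i t)"
proof (induction I rule: infinite_finite_induct)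
  case (insert i I) then show ?case by (auto intro: cadlag_mult)
qed (auto intro: cadlag_const)

lemma lint_diff_bound:
  fixes h :: "real \<Rightarrow> real"
  assumes meas: "h \<in> borel_measurable borel" and bnd: "\<And>u. u \<in> {0..T} \<Longrightarrow> \<bar>h u\<bar> \<le> C"
    and st: "0 \<le> s" "s \<le> t" "t \<le> T"
  shows "\<bar>(LINT u:{0..t}|lborel. h u) - (LINT u:{0..s}|lborel. h u)\<bar> \<le> C * (t - s)"
proof -
  have C0: "0 \<le> C" using bnd[of 0] st by auto
  have ci: "set_integrable lborel A (\<lambda>_. c)" if A: "A \<subseteq> {0..T}" "A \<in> sets borel" for A c
  proof -
    have "emeasure lborel A \<le> emeasure lborel {0..T}" using A by (intro emeasure_mono) auto
    also have "\<dots> < \<infinity>" using st by simp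
    finally show ?thesis unfolding set_integrable_def using A
      by (intro integrable_scaleR_left integrable_indicator) auto
  qed
  have hi: "set_integrable lborel A h" if A: "A \<subseteq> {0..T}" "A \<in> sets borel" for A
  proof (rule set_integrable_bound[OF ci[OF A]])
    show "set_borel_measurable lborel A h" unfolding set_borel_measurable_def using A meas
      by measurable
    show "AE x in lborel. x \<in> A \<longrightarrow> norm (h x) \<le> norm C"
      using A bnd C0 by (intro AE_I2) auto
  qed
  have hb: "-C \<le> h u \<and> h u \<le> C" if "u \<in> {s<..t}" for u
  proof -
    have "\<bar>h u\<bar> \<le> C" using st that by (intro bnd) auto
    then show ?thesis by auto
  qed
  have split: "{0..t} = {0..s} \<union> {s<..t}" using st by auto
  have "(LINT u:{0..t}|lborel. h u) = (LINT u:{0..s}|lborel. h u) + (LINT u:{s<..t}|lborel. h u)"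
    unfolding split using st by (intro set_integral_Un hi) auto
  moreover have "(LINT u:{s<..t}|lborel. h u) \<le> (LINT u:{s<..t}|lborel. C)"
    using st hb by (intro set_integral_mono hi ci) auto
  moreover have "(LINT u:{s<..t}|lborel. - C) \<le> (LINT u:{s<..t}|lborel. h u)"
    using st hb by (intro set_integral_mono hi ci) auto
  moreover have "(LINT u:{s<..t}|lborel. C) = C * (t - s)" using st
    by (subst set_integral_const) auto
  moreover have "(LINT u:{s<..t}|lborel. - C) = - C * (t - s)" using st
    by (subst set_integral_const) auto
  ultimately show ?thesis by (simp add: abs_le_iff)
qed

lemma rc_prob: "rc_filtration M F \<Longrightarrow> prob_space M"
  unfolding rc_filtration_def by blast

lemma rc_sub: "rc_filtration M F \<Longrightarrow> 0 \<le> t \<Longrightarrow> subalgebra M (F t)"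
  unfolding rc_filtration_def by blast

lemma rc_incr: "rc_filtration M F \<Longrightarrow> 0 \<le> s \<Longrightarrow> s \<le> t \<Longrightarrow> sets (F s) \<subseteq> sets (F t)"
  unfolding rc_filtration_def by blast

lemma rc_meas_mono:
  assumes "rc_filtration M F" "0 \<le> s" "s \<le> t" "f \<in> borel_measurable (F s)"
  shows "f \<in> borel_measurable (F t)"
proof -
  have s: "subalgebra M (F s)" and t: "subalgebra M (F t)" and st: "sets (F s) \<subseteq> sets (F t)"
    using assms rc_sub[of M F] rc_incr[of M F] by auto
  have "space (F s) = space (F t)" using s t unfolding subalgebra_def by simp
  then have "subalgebra (F t) (F s)" using st unfolding subalgebra_def by simp
  then show ?thesis using assms(4) by (rule measurable_from_subalg)
qed

lemma rc_meas_M: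
  assumes "rc_filtration M F" "0 \<le> s" "f \<in> borel_measurable (F s)"
  shows "f \<in> borel_measurable M"
proof -
  have "subalgebra M (F s)" using assms rc_sub by blast
  then show ?thesis using assms(3) by (rule measurable_from_subalg)
qed

lemma rc_sfs:
  assumes "rc_filtration M F" "0 \<le> s"
  shows "sigma_finite_subalgebra M (F s)"
proof -
  have P: "prob_space M" and S: "subalgebra M (F s)" using assms rc_sub rc_prob by blast+
  have "finite_measure M" using P by (rule prob_space.finite_measure)
  then have "finite_measure_subalgebra M (F s)"
    unfolding finite_measure_subalgebra_def finite_measure_subalgebra_axioms_def
    using S by blast
  then show ?thesis by (rule finite_measure_subalgebra_is_sigma_finite)
qed

lemma mart_adapt: "martingale M F L \<Longrightarrow> 0 \<le> t \<Longrightarrow> L t \<in> borel_measurable (F t)"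
  unfolding martingale_def adapted_def by blast

lemma mart_int: "martingale M F L \<Longrightarrow> 0 \<le> t \<Longrightarrow> integrable M (L t)"
  unfolding martingale_def by blast

lemma mart_ce: "martingale M F L \<Longrightarrow> 0 \<le> s \<Longrightarrow> s \<le> t \<Longrightarrow>
    AE \<omega> in M. real_cond_exp M (F s) (L t) \<omega> = L s \<omega>"
  unfolding martingale_def by blast

lemma martI:
  assumes "\<And>t. 0 \<le> t \<Longrightarrow> L t \<in> borel_measurable (F t)"
    "\<And>t. 0 \<le> t \<Longrightarrow> integrable M (L t)"
    "\<And>s t. 0 \<le> s \<Longrightarrow> s \<le> t \<Longrightarrow> AE \<omega> in M. real_cond_exp M (F s) (L t) \<omega> = L s \<omega>"
  shows "martingale M F L"
  unfolding martingale_def adapted_def using assms by blast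

lemma martingale_zero:
  assumes "rc_filtration M F"
  shows "martingale M F (\<lambda>t \<omega>. 0)"
proof (rule martI)
  fix s t :: real assume "0 \<le> s" "s \<le> t"
  interpret sigma_finite_subalgebra M "F s" using rc_sfs[OF assms \<open>0 \<le> s\<close>] .
  show "AE \<omega> in M. real_cond_exp M (F s) (\<lambda>\<omega>. 0) \<omega> = 0"
    by (rule real_cond_exp_F_meas) auto
qed auto

lemma martingale_stopped_const:
  assumes rc: "rc_filtration M F" and L: "martingale M F L" and c: "0 \<le> c"
  shows "martingale M F (\<lambda>t \<omega>. L (min t c) \<omega>)"
proof (rule martI)
  fix t :: real assume t: "0 \<le> t"
  have m: "0 \<le> min t c" using t c by simp
  have "L (min t c) \<in> borel_measurable (F (min t c))" by (rule mart_adapt[OF L m])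
  then show "L (min t c) \<in> borel_measurable (F t)"
    using rc_meas_mono[OF rc m min.cobounded1] by blast
  show "integrable M (L (min t c))" by (rule mart_int[OF L m])
next
  fix s t :: real assume st: "0 \<le> s" "s \<le> t"
  show "AE \<omega> in M. real_cond_exp M (F s) (L (min t c)) \<omega> = L (min s c) \<omega>"
  proof (cases "s \<le> c")
    case True
    then have e: "min s c = s" and "s \<le> min t c" using st by auto
    have "AE \<omega> in M. real_cond_exp M (F s) (L (min t c)) \<omega> = L s \<omega>"
      by (rule mart_ce[OF L st(1) \<open>s \<le> min t c\<close>])
    then show ?thesis unfolding e .
  next
    case False
    then have eq: "min s c = c" "min t c = c" using st by auto
    interpret sigma_finite_subalgebra M "F s" using rc_sfs[OF rc \<open>0 \<le> s\<close>] .
    have "L c \<in> borel_measurable (F c)" by (rule mart_adapt[OF L c])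
    then have "L c \<in> borel_measurable (F s)" using False c rc_meas_mono[OF rc c, of s] by auto
    moreover have "integrable M (L c)" by (rule mart_int[OF L c])
    ultimately show ?thesis unfolding eq by (intro real_cond_exp_F_meas)
  qed
qed

lemma martingale_local:
  assumes rc: "rc_filtration M F" and L: "martingale M F L"
  shows "local_martingale M F L"
  unfolding local_martingale_def
proof (intro exI[of _ "\<lambda>k \<omega>. real k"] conjI allI)
  fix k
  show "stopping_time_on M F (\<lambda>\<omega>. real k)"
    unfolding stopping_time_on_def
  proof (intro conjI allI impI ballI)
    fix t :: real assume t: "0 \<le> t"
    have sub: "subalgebra M (F t)" using rc t by (rule rc_sub)
    have "space M \<in> sets (F t)" using sub unfolding subalgebra_def by (metis sets.top)
    then show "{\<omega> \<in> space M. real k \<le> t} \<in> sets (F t)"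
      by (cases "real k \<le> t") auto
  qed simp
  show "martingale M F (\<lambda>t \<omega>. L (min t (real k)) \<omega>)"
    by (rule martingale_stopped_const[OF rc L]) simp
next
  show "AE \<omega> in M. mono (\<lambda>k. real k) \<and> filterlim (\<lambda>k. real k) at_top sequentially"
    by (auto simp: mono_def filterlim_real_sequentially)
qed

lemma lint_point0: "(LINT s:{0..0::real}|lborel. f s) = 0"
  unfolding set_lebesgue_integral_def
  by (rule integral_eq_zero_AE) (use AE_lborel_singleton[of 0] in \<open>auto elim!: eventually_mono\<close>)

lemma lint_point0': "(LINT s:{0::real}|lborel. f s) = 0"
  using lint_point0[of f] by simp

lemma semimart_from_drift:
  fixes Y :: "real \<Rightarrow> 'a \<Rightarrow> real" and g :: "real \<Rightarrow> 'a \<Rightarrow> real"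
  assumes rc: "rc_filtration M F"
    and ad: "adapted M F Y"
    and cad: "\<And>\<omega>. \<omega> \<in> space M \<Longrightarrow> cadlag (\<lambda>t. Y t \<omega>)"
    and mart: "martingale M F (\<lambda>t \<omega>. Y t \<omega> - Y 0 \<omega> - (LINT s:{0..t}|lborel. g s \<omega>))"
    and gm: "\<And>\<omega>. \<omega> \<in> space M \<Longrightarrow> \<exists>g'. g' \<in> borel_measurable borel \<and> (\<forall>s\<ge>0. g' s = g s \<omega>)
                    \<and> (\<forall>T\<ge>0. \<exists>C. \<forall>s\<in>{0..T}. \<bar>g' s\<bar> \<le> C)"
  shows "semimartingale M F Y"
proof -
  define L where "L = (\<lambda>t \<omega>. Y t \<omega> - Y 0 \<omega> - (LINT s:{0..t}|lborel. g s \<omega>))"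
  define A where "A = (\<lambda>t \<omega>. (LINT s:{0..t}|lborel. g s \<omega>))"
  have lm: "local_martingale M F L" unfolding L_def using martingale_local[OF rc mart] .
  have adA: "adapted M F A"
    unfolding adapted_def
  proof (intro allI impI)
    fix t :: real assume t: "0 \<le> t"
    have "Y t \<in> borel_measurable (F t)" using ad t unfolding adapted_def by auto
    moreover have "Y 0 \<in> borel_measurable (F t)"
      using ad t rc_meas_mono[OF rc order_refl t, of "Y 0"] unfolding adapted_def by auto
    moreover have "L t \<in> borel_measurable (F t)"
      using mart_adapt[OF mart t] unfolding L_def .
    ultimately have "(\<lambda>\<omega>. Y t \<omega> - Y 0 \<omega> - L t \<omega>) \<in> borel_measurable (F t)"
      by (intro borel_measurable_diff)
    moreover have "(\<lambda>\<omega>. Y t \<omega> - Y 0 \<omega> - L t \<omega>) = A t" unfolding L_def A_def by (rule ext) simp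
    ultimately show "A t \<in> borel_measurable (F t)" by simp
  qed
  have pathA: "cadlag (\<lambda>t. A t \<omega>) \<and> (\<forall>t\<ge>0. bounded_variation_on 0 t (\<lambda>s. A s \<omega>))"
    if \<omega>: "\<omega> \<in> space M" for \<omega>
  proof -
    obtain g' where g': "g' \<in> borel_measurable borel" "\<And>s. s \<ge> 0 \<Longrightarrow> g' s = g s \<omega>"
      "\<And>T. T \<ge> 0 \<Longrightarrow> \<exists>C. \<forall>s\<in>{0..T}. \<bar>g' s\<bar> \<le> C"
      using gm[OF \<omega>] by blast
    have Aeq: "A t \<omega> = (LINT s:{0..t}|lborel. g' s)" for t
      unfolding A_def by (rule set_lebesgue_integral_cong) (auto simp: g'(2))
    have lip: "\<exists>C. \<forall>s t. 0 \<le> s \<longrightarrow> s \<le> t \<longrightarrow> t \<le> T \<longrightarrow> \<bar>A t \<omega> - A s \<omega>\<bar> \<le> C * (t - s)"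
      if T: "0 \<le> T" for T
    proof -
      obtain C where C: "\<forall>s\<in>{0..T}. \<bar>g' s\<bar> \<le> C" using g'(3)[OF T] by blast
      have bnd: "\<And>u. u \<in> {0..T} \<Longrightarrow> \<bar>g' u\<bar> \<le> C" using C by blast
      have "\<forall>s t. 0 \<le> s \<longrightarrow> s \<le> t \<longrightarrow> t \<le> T \<longrightarrow> \<bar>A t \<omega> - A s \<omega>\<bar> \<le> C * (t - s)"
      proof (intro allI impI)
        fix s t :: real assume st: "0 \<le> s" "s \<le> t" "t \<le> T"
        show "\<bar>A t \<omega> - A s \<omega>\<bar> \<le> C * (t - s)" unfolding Aeq
          by (rule lint_diff_bound[OF g'(1) bnd st])
      qed
      then show ?thesis by blast
    qed
    have contA: "((\<lambda>t. A t \<omega>) \<longlongrightarrow> A t \<omega>) (at t within {0..})" if t: "0 \<le> t" for t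
    proof -
      have "0 \<le> t + 1" using t by simp
      from lip[OF this] obtain C where C: "\<forall>s u. 0 \<le> s \<longrightarrow> s \<le> u \<longrightarrow> u \<le> t + 1 \<longrightarrow> \<bar>A u \<omega> - A s \<omega>\<bar> \<le> C * (u - s)"
        by blast
      have "\<bar>A 1 \<omega> - A 0 \<omega>\<bar> \<le> C" using C[rule_format, of 0 1] t by simp
      then have C0: "0 \<le> C" using abs_ge_zero[of "A 1 \<omega> - A 0 \<omega>"] by linarith
      show ?thesis
        unfolding tendsto_iff
      proof (intro allI impI)
        fix e :: real assume e: "0 < e"
        define r where "r = min 1 (e / (C + 1))"
        have r0: "0 < r" using e C0 unfolding r_def by simp
        show "eventually (\<lambda>u. dist (A u \<omega>) (A t \<omega>) < e) (at t within {0..})"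
          unfolding eventually_at
        proof (intro exI[of _ r] conjI ballI impI)
          show "0 < r" by (rule r0)
          fix u :: real assume u0: "u \<in> {0..}" and ud: "u \<noteq> t \<and> dist u t < r"
          have u: "0 \<le> u" "\<bar>u - t\<bar> < 1" "\<bar>u - t\<bar> < e / (C + 1)"
            using u0 ud unfolding r_def dist_real_def by auto
          have "\<bar>A u \<omega> - A t \<omega>\<bar> \<le> C * \<bar>u - t\<bar>"
          proof (cases "u \<le> t")
            case True
            then have "\<bar>A t \<omega> - A u \<omega>\<bar> \<le> C * (t - u)" using C[rule_format, of u t] u t by linarith
            then show ?thesis using True by (simp add: abs_minus_commute)
          next
            case False
            then have "\<bar>A u \<omega> - A t \<omega>\<bar> \<le> C * (u - t)" using C[rule_format, of t u] u t by linarith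
            then show ?thesis using False by simp
          qed
          also have "\<dots> \<le> C * (e / (C + 1))" using u C0 by (intro mult_left_mono) auto
          also have "\<dots> = e * (C / (C + 1))" by simp
          also have "\<dots> < e * 1" using e C0 by (intro mult_strict_left_mono) auto
          finally show "dist (A u \<omega>) (A t \<omega>) < e" by (simp add: dist_real_def)
        qed
      qed
    qed
    have cadA: "cadlag (\<lambda>t. A t \<omega>)"
      unfolding cadlag_def
    proof (intro allI impI conjI)
      fix t :: real assume t: "0 \<le> t"
      have "at_right t \<le> at t within {0..}" using t by (intro at_le) auto
      then show "continuous (at_right t) (\<lambda>t. A t \<omega>)"
        unfolding continuous_within using contA[OF t] by (rule tendsto_mono)
      assume "0 < t"
      have "at_left t \<le> at t within {0..}"
      proof (rule filter_leI)
        fix P assume "eventually P (at t within {0..})"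
        then obtain d where d: "d > 0" "\<forall>x\<in>{0..}. x \<noteq> t \<and> dist x t < d \<longrightarrow> P x"
          unfolding eventually_at by blast
        show "eventually P (at_left t)" unfolding eventually_at_left_field
        proof (intro exI[of _ "max 0 (t - d)"] conjI allI impI)
          show "max 0 (t - d) < t" using d \<open>0 < t\<close> by simp
          fix y assume y: "max 0 (t - d) < y" "y < t"
          then have "y \<in> {0..}" "y \<noteq> t" "dist y t < d" by (auto simp: dist_real_def)
          then show "P y" using d(2) by blast
        qed
      qed
      then show "\<exists>l. ((\<lambda>t. A t \<omega>) \<longlongrightarrow> l) (at_left t)"
        using tendsto_mono[OF _ contA[OF t]] by blast
    qed
    have bvA: "bounded_variation_on 0 t (\<lambda>s. A s \<omega>)" if t: "0 \<le> t" for t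
    proof -
      from lip[OF t] obtain C where C: "\<forall>s u. 0 \<le> s \<longrightarrow> s \<le> u \<longrightarrow> u \<le> t \<longrightarrow> \<bar>A u \<omega> - A s \<omega>\<bar> \<le> C * (u - s)"
        by blast
      show ?thesis
        unfolding bounded_variation_on_def
      proof (intro exI[of _ "C * t"] allI impI)
        fix p :: "nat \<Rightarrow> real" and N
        assume p: "p 0 = 0" "p N = t" "\<forall>k<N. p k \<le> p (Suc k)"
        have mono: "p i \<le> p j" if "i \<le> j" "j \<le> N" for i j
          using that
        proof (induction j)
          case (Suc j) then show ?case using p(3) by (cases "i = Suc j") (auto intro: order_trans)
        qed simp
        have rng: "0 \<le> p k \<and> p k \<le> t" if "k \<le> N" for k
          using mono[of 0 k] mono[of k N] that p by auto
        have "(\<Sum>k<N. \<bar>A (p (Suc k)) \<omega> - A (p k) \<omega>\<bar>) \<le> (\<Sum>k<N. C * (p (Suc k) - p k))"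
          using rng p(3) C by (intro sum_mono) auto
        also have "\<dots> = C * (p N - p 0)"
          by (simp add: sum_distrib_left[symmetric] sum_lessThan_telescope)
        finally show "(\<Sum>k<N. \<bar>A (p (Suc k)) \<omega> - A (p k) \<omega>\<bar>) \<le> C * t" using p by simp
      qed
    qed
    show ?thesis using cadA bvA by auto
  qed
  have P1: "\<forall>\<omega>\<in>space M. L 0 \<omega> = 0 \<and> A 0 \<omega> = 0 \<and> cadlag (\<lambda>t. A t \<omega>) \<and>
                       (\<forall>t\<ge>0. bounded_variation_on 0 t (\<lambda>s. A s \<omega>))"
    using pathA unfolding L_def A_def by (simp add: lint_point0')
  have P2: "\<forall>t\<ge>0. \<forall>\<omega>\<in>space M. Y t \<omega> = Y 0 \<omega> + L t \<omega> + A t \<omega>"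
    unfolding L_def A_def by simp
  have "\<forall>\<omega>\<in>space M. cadlag (\<lambda>t. Y t \<omega>)" using cad by blast
  then show ?thesis
    unfolding semimartingale_def using ad lm adA P1 P2 by blast
qed

lemma lb_nonneg: "\<forall>s\<in>{0..T}. \<bar>f s\<bar> \<le> C \<Longrightarrow> 0 \<le> (T::real) \<Longrightarrow> 0 \<le> (C::real)"
proof -
  assume C: "\<forall>s\<in>{0..T}. \<bar>f s\<bar> \<le> C" and T: "0 \<le> T"
  have "\<bar>f 0\<bar> \<le> C" using C[rule_format, of 0] T by simp
  then show "0 \<le> C" using abs_ge_zero[of "f 0"] by linarith
qed

lemma lb_const: "locally_bounded (\<lambda>_. c)"
  unfolding locally_bounded_def by auto

lemma lb_add: "locally_bounded f \<Longrightarrow> locally_bounded g \<Longrightarrow> locally_bounded (\<lambda>s. f s + g s)"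
  unfolding locally_bounded_def
proof (intro allI impI)
  fix T :: real assume f: "\<forall>T\<ge>0. \<exists>C. \<forall>s\<in>{0..T}. \<bar>f s\<bar> \<le> C" and g: "\<forall>T\<ge>0. \<exists>C. \<forall>s\<in>{0..T}. \<bar>g s\<bar> \<le> C"
    and T: "0 \<le> T"
  obtain C1 C2 where C1: "\<forall>s\<in>{0..T}. \<bar>f s\<bar> \<le> C1" and C2: "\<forall>s\<in>{0..T}. \<bar>g s\<bar> \<le> C2"
    using f g T by blast
  have "\<forall>s\<in>{0..T}. \<bar>f s + g s\<bar> \<le> C1 + C2"
  proof
    fix s assume "s \<in> {0..T}"
    then have "\<bar>f s\<bar> \<le> C1" "\<bar>g s\<bar> \<le> C2" using C1 C2 by auto
    then show "\<bar>f s + g s\<bar> \<le> C1 + C2" using abs_triangle_ineq[of "f s" "g s"] by linarith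
  qed
  then show "\<exists>C. \<forall>s\<in>{0..T}. \<bar>f s + g s\<bar> \<le> C" by blast
qed

lemma lb_mult: "locally_bounded f \<Longrightarrow> locally_bounded g \<Longrightarrow> locally_bounded (\<lambda>s. f s * g s)"
  unfolding locally_bounded_def
proof (intro allI impI)
  fix T :: real assume f: "\<forall>T\<ge>0. \<exists>C. \<forall>s\<in>{0..T}. \<bar>f s\<bar> \<le> C" and g: "\<forall>T\<ge>0. \<exists>C. \<forall>s\<in>{0..T}. \<bar>g s\<bar> \<le> C"
    and T: "0 \<le> T"
  obtain C1 C2 where C1: "\<forall>s\<in>{0..T}. \<bar>f s\<bar> \<le> C1" and C2: "\<forall>s\<in>{0..T}. \<bar>g s\<bar> \<le> C2"
    using f g T by blast
  have "0 \<le> C1" using lb_nonneg[OF C1 T] .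
  have "\<forall>s\<in>{0..T}. \<bar>f s * g s\<bar> \<le> C1 * C2"
  proof
    fix s assume "s \<in> {0..T}"
    then have "\<bar>f s\<bar> \<le> C1" "\<bar>g s\<bar> \<le> C2" using C1 C2 by auto
    then show "\<bar>f s * g s\<bar> \<le> C1 * C2" unfolding abs_mult using \<open>0 \<le> C1\<close>
      by (intro mult_mono) auto
  qed
  then show "\<exists>C. \<forall>s\<in>{0..T}. \<bar>f s * g s\<bar> \<le> C" by blast
qed

lemma lb_sum: "(\<And>i. i \<in> S \<Longrightarrow> locally_bounded (f i)) \<Longrightarrow> locally_bounded (\<lambda>s. \<Sum>i\<in>S. f i s)"
proof (induction S rule: infinite_finite_induct)
  case (insert i S) then show ?case by (simp add: lb_add)
qed (simp_all add: lb_const)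

lemma lb_prod: "(\<And>i. i \<in> S \<Longrightarrow> locally_bounded (f i)) \<Longrightarrow> locally_bounded (\<lambda>s. \<Prod>i\<in>S. f i s)"
proof (induction S rule: infinite_finite_induct)
  case (insert i S) then show ?case by (simp add: lb_mult)
qed (simp_all add: lb_const)

lemma lb_power: "locally_bounded f \<Longrightarrow> locally_bounded (\<lambda>s. f s ^ k)"
  by (induction k) (simp_all add: lb_const lb_mult)

lemma lb_cadlag_max0: "cadlag f \<Longrightarrow> locally_bounded (\<lambda>s. f (max 0 s))"
  unfolding locally_bounded_def
proof (intro allI impI)
  fix T :: real assume f: "cadlag f" and T: "0 \<le> T"
  obtain C where C: "\<forall>s\<in>{0..T}. \<bar>f s\<bar> \<le> C" using cadlag_bounded[OF f T] by blast
  have "\<forall>s\<in>{0..T}. \<bar>f (max 0 s)\<bar> \<le> C" using C by auto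
  then show "\<exists>C. \<forall>s\<in>{0..T}. \<bar>f (max 0 s)\<bar> \<le> C" by blast
qed

lemma semimart_coord:
  "vsemimartingale M F I X \<Longrightarrow> i \<in> I \<Longrightarrow> semimartingale M F (\<lambda>t \<omega>. X t \<omega> i)"
  unfolding vsemimartingale_def by blast

lemma semimart_adapted: "semimartingale M F Y \<Longrightarrow> 0 \<le> t \<Longrightarrow> Y t \<in> borel_measurable (F t)"
  unfolding semimartingale_def adapted_def by blast

lemma semimart_cadlag: "semimartingale M F Y \<Longrightarrow> \<omega> \<in> space M \<Longrightarrow> cadlag (\<lambda>t. Y t \<omega>)"
  unfolding semimartingale_def by blast

lemma mpow_semimart:
  fixes X :: "real \<Rightarrow> 'a \<Rightarrow> 'i \<Rightarrow> real"
  assumes rc: "rc_filtration M F" and vs: "vsemimartingale M F I X" and I: "finite I"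
    and bm: "\<forall>\<mu>\<in>Mu. b \<mu> \<in> borel_measurable borel \<and> locally_bounded (b \<mu>)"
    and mart: "martingale M F (\<lambda>t \<omega>. mpow I l (X t \<omega>) - mpow I l (X 0 \<omega>)
            - (LINT s:{0..t}|lborel. (\<Sum>\<mu>\<in>Mu. b \<mu> s * mpow I \<mu> (X s \<omega>))))"
  shows "semimartingale M F (\<lambda>t \<omega>. mpow I l (X t \<omega>))"
proof (rule semimart_from_drift[OF rc _ _ mart])
  show "adapted M F (\<lambda>t \<omega>. mpow I l (X t \<omega>))"
    unfolding adapted_def mpow_def
  proof (intro allI impI borel_measurable_prod borel_measurable_power)
    fix t :: real and i assume "0 \<le> t" "i \<in> I"
    then show "(\<lambda>\<omega>. X t \<omega> i) \<in> borel_measurable (F t)"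
      using semimart_adapted[OF semimart_coord[OF vs \<open>i \<in> I\<close>] \<open>0 \<le> t\<close>] by simp
  qed
  show "cadlag (\<lambda>t. mpow I l (X t \<omega>))" if "\<omega> \<in> space M" for \<omega>
    unfolding mpow_def
    by (intro cadlag_prod cadlag_power semimart_cadlag[OF semimart_coord[OF vs] that])
  fix \<omega> assume \<omega>: "\<omega> \<in> space M"
  have cad: "cadlag (\<lambda>t. X t \<omega> i)" if "i \<in> I" for i
    using semimart_cadlag[OF semimart_coord[OF vs that] \<omega>] .
  define g' where "g' = (\<lambda>s. \<Sum>\<mu>\<in>Mu. b \<mu> s * (\<Prod>i\<in>I. X (max 0 s) \<omega> i ^ \<mu> i))"
  have mx: "(\<lambda>s. X (max 0 s) \<omega> i) \<in> borel_measurable borel" if "i \<in> I" for i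
    by (rule right_cont_measurable) (rule cadlag_max0_right_cont[OF cad[OF that]])
  have "g' \<in> borel_measurable borel"
    unfolding g'_def using bm mx
    by (intro borel_measurable_sum borel_measurable_times borel_measurable_prod borel_measurable_power) auto
  moreover have "\<forall>s\<ge>0. g' s = (\<Sum>\<mu>\<in>Mu. b \<mu> s * mpow I \<mu> (X s \<omega>))"
    unfolding g'_def mpow_def by simp
  moreover have "locally_bounded g'"
    unfolding g'_def using bm lb_cadlag_max0[OF cad]
    by (intro lb_sum lb_mult lb_prod lb_power) auto
  ultimately show "\<exists>g'. g' \<in> borel_measurable borel \<and> (\<forall>s\<ge>0. g' s = (\<Sum>\<mu>\<in>Mu. b \<mu> s * mpow I \<mu> (X s \<omega>)))
                    \<and> (\<forall>T\<ge>0. \<exists>C. \<forall>s\<in>{0..T}. \<bar>g' s\<bar> \<le> C)"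
    unfolding locally_bounded_def by blast
qed

lemma integ_lin:
  fixes f g :: "real \<Rightarrow> 'a \<Rightarrow> real"
  assumes hf: "\<forall>t\<ge>0. (\<integral>\<^sup>+ s\<in>{0..t}. (\<integral>\<^sup>+ \<omega>. ennreal (f s \<omega>) \<partial>M) \<partial>lborel) < \<infinity>"
    and le: "\<And>s \<omega>. 0 \<le> s \<Longrightarrow> \<omega> \<in> space M \<Longrightarrow> g s \<omega> \<le> K * f s \<omega>"
    and K: "0 \<le> K"
  shows "\<forall>t\<ge>0. (\<integral>\<^sup>+ s\<in>{0..t}. (\<integral>\<^sup>+ \<omega>. ennreal (g s \<omega>) \<partial>M) \<partial>lborel) < \<infinity>"
proof (intro allI impI)
  fix t :: real assume t: "0 \<le> t"
  have inner: "(\<integral>\<^sup>+ \<omega>. ennreal (g s \<omega>) \<partial>M) \<le> ennreal K * (\<integral>\<^sup>+ \<omega>. ennreal (f s \<omega>) \<partial>M)"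
    if s: "0 \<le> s" for s
  proof -
    have "(\<integral>\<^sup>+ \<omega>. ennreal (g s \<omega>) \<partial>M) \<le> (\<integral>\<^sup>+ \<omega>. ennreal K * ennreal (f s \<omega>) \<partial>M)"
    proof (rule nn_integral_mono)
      fix \<omega> assume "\<omega> \<in> space M"
      then have "g s \<omega> \<le> K * f s \<omega>" using le s by blast
      then have "ennreal (g s \<omega>) \<le> ennreal (K * f s \<omega>)" by (rule ennreal_leI)
      also have "\<dots> \<le> ennreal K * ennreal (f s \<omega>)"
        using K by (simp add: ennreal_mult')
      finally show "ennreal (g s \<omega>) \<le> ennreal K * ennreal (f s \<omega>)" .
    qed
    also have "\<dots> \<le> ennreal K * (\<integral>\<^sup>+ \<omega>. ennreal (f s \<omega>) \<partial>M)"
      by (rule nn_integral_cmult_le) simp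
    finally show ?thesis .
  qed
  have "(\<integral>\<^sup>+ s\<in>{0..t}. (\<integral>\<^sup>+ \<omega>. ennreal (g s \<omega>) \<partial>M) \<partial>lborel)
      \<le> (\<integral>\<^sup>+ s. ennreal K * ((\<integral>\<^sup>+ \<omega>. ennreal (f s \<omega>) \<partial>M) * indicator {0..t} s) \<partial>lborel)"
  proof (rule nn_integral_mono)
    fix s :: real assume "s \<in> space lborel"
    show "(\<integral>\<^sup>+ \<omega>. ennreal (g s \<omega>) \<partial>M) * indicator {0..t} s
        \<le> ennreal K * ((\<integral>\<^sup>+ \<omega>. ennreal (f s \<omega>) \<partial>M) * indicator {0..t} s)"
    proof (cases "s \<in> {0..t}")
      case True
      then show ?thesis using inner[of s] by simp
    qed simp
  qed
  also have "\<dots> \<le> ennreal K * (\<integral>\<^sup>+ s\<in>{0..t}. (\<integral>\<^sup>+ \<omega>. ennreal (f s \<omega>) \<partial>M) \<partial>lborel)"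
    by (rule nn_integral_cmult_le) simp
  also have "\<dots> < \<infinity>" using hf t by (simp add: ennreal_mult_less_top)
  finally show "(\<integral>\<^sup>+ s\<in>{0..t}. (\<integral>\<^sup>+ \<omega>. ennreal (g s \<omega>) \<partial>M) \<partial>lborel) < \<infinity>" .
qed

definition delta :: "'i \<Rightarrow> 'i \<Rightarrow> nat" where
  "delta k = (\<lambda>j. if j = k then 1 else 0)"

lemma finite_multi_le:
  assumes "finite I" shows "finite (multi_le I m)"
proof (rule finite_subset)
  show "multi_le I m \<subseteq> {f. \<forall>x. (x \<in> I \<longrightarrow> f x \<in> {..m}) \<and> (x \<notin> I \<longrightarrow> f x = 0)}"
  proof (intro subsetI CollectI allI conjI impI)
    fix f x assume f: "f \<in> multi_le I m"
    {
      assume x: "x \<in> I"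
      have "f x \<le> (\<Sum>i\<in>I. f i)" using assms x by (intro member_le_sum) auto
      also have "\<dots> \<le> m" using f unfolding multi_le_def by auto
      finally show "f x \<in> {..m}" by simp
    }
    {
      assume "x \<notin> I" then show "f x = 0" using f unfolding multi_le_def by auto
    }
  qed
  show "finite {f. \<forall>x. (x \<in> I \<longrightarrow> f x \<in> {..m}) \<and> (x \<notin> I \<longrightarrow> f x = (0::nat))}"
    by (rule finite_set_of_finite_funs) (use assms in auto)
qed

lemma delta_in_multi_le: "finite I \<Longrightarrow> k \<in> I \<Longrightarrow> 1 \<le> m \<Longrightarrow> delta k \<in> multi_le I m"
  unfolding multi_le_def delta_def by auto

lemma zero_in_multi_le: "(\<lambda>_. 0) \<in> multi_le I m"
  unfolding multi_le_def by auto

lemma deg_delta: "finite I \<Longrightarrow> k \<in> I \<Longrightarrow> deg I (delta k) = 1"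
  unfolding deg_def delta_def by simp

lemma delta_ne_zero: "delta k \<noteq> (\<lambda>_. 0)"
  unfolding delta_def by (metis one_neq_zero)

lemma delta_inj: "delta k = delta j \<Longrightarrow> k = j"
  unfolding delta_def by (metis one_neq_zero)

lemma multi_le_1:
  assumes I: "finite I"
  shows "multi_le I 1 = insert (\<lambda>_. 0) (delta ` I)"
proof (intro equalityI subsetI)
  fix l assume l: "l \<in> multi_le I 1"
  then have out: "\<And>i. i \<notin> I \<Longrightarrow> l i = 0" and s: "(\<Sum>i\<in>I. l i) \<le> 1" unfolding multi_le_def by auto
  show "l \<in> insert (\<lambda>_. 0) (delta ` I)"
  proof (cases "\<forall>i\<in>I. l i = 0")
    case True
    then have "l = (\<lambda>_. 0)" using out by (intro ext) metis
    then show ?thesis by simp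
  next
    case False
    then obtain k where k: "k \<in> I" "l k \<noteq> 0" by blast
    have lk: "l k \<le> 1" using member_le_sum[of k I l] k I s by auto
    have "l = delta k"
    proof
      fix j show "l j = delta k j"
      proof (cases "j \<in> I")
        case False then show ?thesis using out k unfolding delta_def by auto
      next
        case True
        show ?thesis
        proof (cases "j = k")
          case True then show ?thesis using lk k unfolding delta_def by auto
        next
          case False
          have "l k + l j = (\<Sum>i\<in>{k, j}. l i)" using False by simp
          also have "\<dots> \<le> (\<Sum>i\<in>I. l i)" using \<open>j \<in> I\<close> k I by (intro sum_mono2) auto
          finally show ?thesis using s k False unfolding delta_def by auto
        qed
      qed
    qed
    then show ?thesis using k by simp
  qed
next
  fix l assume "l \<in> insert (\<lambda>_. 0) (delta ` I)"
  then show "l \<in> multi_le I 1" using I by (auto intro: zero_in_multi_le delta_in_multi_le)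
qed

lemma mpow_zero[simp]: "mpow I (\<lambda>_. 0) y = 1"
  unfolding mpow_def by simp

lemma mpow_delta: "finite I \<Longrightarrow> k \<in> I \<Longrightarrow> mpow I (delta k) y = y k"
proof -
  assume I: "finite I" "k \<in> I"
  have "mpow I (delta k) y = (\<Prod>j\<in>I. if j = k then y j else 1)"
    unfolding mpow_def delta_def by (intro prod.cong) auto
  also have "\<dots> = y k" using I by (simp add: prod.delta)
  finally show ?thesis .
qed

lemma sum_multi_le_1:
  assumes "finite I"
  shows "(\<Sum>\<mu>\<in>multi_le I 1. f \<mu>) = f (\<lambda>_. 0) + (\<Sum>k\<in>I. f (delta k))"
proof -
  have "(\<Sum>\<mu>\<in>multi_le I 1. f \<mu>) = f (\<lambda>_. 0) + sum f (delta ` I)"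
  proof -
    have "(\<lambda>_. 0) \<notin> delta ` I" by (metis delta_ne_zero imageE)
    then show ?thesis unfolding multi_le_1[OF assms] using assms by (subst sum.insert) auto
  qed
  also have "sum f (delta ` I) = (\<Sum>k\<in>I. f (delta k))"
  proof -
    have "inj_on delta I" by (auto simp: inj_on_def dest: delta_inj)
    then show ?thesis by (simp add: sum.reindex)
  qed
  finally show ?thesis .
qed

lemma multi_le_mono: "m \<le> m' \<Longrightarrow> multi_le I m \<subseteq> multi_le I m'"
  unfolding multi_le_def by auto

lemma deg_le: "l \<in> multi_le I m \<Longrightarrow> deg I l \<le> m"
  unfolding multi_le_def deg_def by auto

lemma in_multi_le_deg: "l \<in> multi_le I m \<Longrightarrow> l \<in> multi_le I (deg I l)"
  unfolding multi_le_def deg_def by auto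

definition cnt :: "nat \<Rightarrow> nat list \<Rightarrow> nat \<Rightarrow> nat" where
  "cnt d js i = (if i < d then length (filter (\<lambda>j. j = Suc i) js) else 0)"

lemma cnt_Nil: "cnt d [] = (\<lambda>_. 0)"
  unfolding cnt_def by auto

lemma cnt_Cons: "cnt d (j # js) i = cnt d js i + (if i < d \<and> j = Suc i then 1 else 0)"
  unfolding cnt_def by auto

lemma prod_one_ext:
  assumes "j \<le> d"
  shows "(\<Prod>i\<in>{..<d}. x i ^ (if j = Suc i then 1 else 0)) = one_ext x j"
proof (cases j)
  case 0 then show ?thesis unfolding one_ext_def by simp
next
  case (Suc m)
  then have m: "m < d" using assms by simp
  have "(\<Prod>i\<in>{..<d}. x i ^ (if j = Suc i then 1 else 0)) = (\<Prod>i\<in>{..<d}. if i = m then x i else 1)"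
    by (rule prod.cong) (auto simp: Suc)
  also have "\<dots> = x m" using m by (simp add: prod.delta)
  finally show ?thesis unfolding one_ext_def using Suc by simp
qed

lemma kron_mpow:
  "set js \<subseteq> {..d} \<Longrightarrow> kron_pow (one_ext x) js = mpow {..<d} (cnt d js) x"
proof (induction js)
  case Nil then show ?case unfolding kron_pow_def mpow_def cnt_Nil by simp
next
  case (Cons j js)
  have "mpow {..<d} (cnt d (j # js)) x
      = (\<Prod>i\<in>{..<d}. x i ^ cnt d js i * x i ^ (if j = Suc i then 1 else 0))"
    unfolding mpow_def by (rule prod.cong) (auto simp: cnt_Cons power_add)
  also have "\<dots> = mpow {..<d} (cnt d js) x * (\<Prod>i\<in>{..<d}. x i ^ (if j = Suc i then 1 else 0))"
    unfolding mpow_def by (rule prod.distrib)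
  also have "\<dots> = mpow {..<d} (cnt d js) x * one_ext x j"
    using Cons.prems prod_one_ext[of j d x] by simp
  also have "\<dots> = kron_pow (one_ext x) (j # js)"
    using Cons by (simp add: kron_pow_def)
  finally show ?case ..
qed

lemma sum_ind_le1: "(\<Sum>i\<in>{..<d}. if i < d \<and> j = Suc i then 1 else 0::nat) \<le> 1"
proof (cases j)
  case 0 then show ?thesis by simp
next
  case (Suc m)
  have "(\<Sum>i\<in>{..<d}. if i < d \<and> j = Suc i then 1 else 0::nat) = (\<Sum>i\<in>{..<d}. if i = m then 1 else 0)"
    by (rule sum.cong) (auto simp: Suc)
  also have "\<dots> \<le> 1" by (simp add: sum.delta)
  finally show ?thesis .
qed

lemma sum_cnt_le: "(\<Sum>i\<in>{..<d}. cnt d js i) \<le> length js"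
proof (induction js)
  case Nil then show ?case by (simp add: cnt_Nil)
next
  case (Cons j js)
  have "(\<Sum>i\<in>{..<d}. cnt d (j # js) i)
     = (\<Sum>i\<in>{..<d}. cnt d js i) + (\<Sum>i\<in>{..<d}. if i < d \<and> j = Suc i then 1 else 0)"
    unfolding cnt_Cons sum.distrib by simp
  also have "\<dots> \<le> length js + 1" using Cons.IH sum_ind_le1[of d j] by linarith
  finally show ?case by simp
qed

lemma cnt_multi_le: "length js = m \<Longrightarrow> cnt d js \<in> multi_le {..<d} m"
  unfolding multi_le_def using sum_cnt_le[of d js] by (auto simp: cnt_def)

definition word :: "nat \<Rightarrow> nat \<Rightarrow> (nat \<Rightarrow> nat) \<Rightarrow> nat list" where
  "word d m \<nu> = replicate (m - deg {..<d} \<nu>) 0 @ concat (map (\<lambda>i. replicate (\<nu> i) (Suc i)) [0..<d])"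

lemma word_set: "set (word d m \<nu>) \<subseteq> {..d}"
  unfolding word_def by auto

lemma length_concat_rep: "length (concat (map (\<lambda>i. replicate (\<nu> i) (Suc i)) [0..<d])) = deg {..<d} \<nu>"
proof -
  have "length (concat (map (\<lambda>i. replicate (\<nu> i) (Suc i)) [0..<d])) = sum_list (map \<nu> [0..<d])"
    by (simp add: length_concat comp_def)
  also have "\<dots> = sum \<nu> (set [0..<d])" by (rule sum_set_upt_conv_sum_list_nat[symmetric])
  also have "\<dots> = deg {..<d} \<nu>" unfolding deg_def by (simp add: atLeast0LessThan)
  finally show ?thesis .
qed

lemma word_length: "\<nu> \<in> multi_le {..<d} m \<Longrightarrow> length (word d m \<nu>) = m"
  unfolding word_def using length_concat_rep[of \<nu> d] by (auto simp: multi_le_def deg_def)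

lemma word_kron_index: "\<nu> \<in> multi_le {..<d} m \<Longrightarrow> word d m \<nu> \<in> kron_index d m"
  unfolding kron_index_def using word_length word_set by auto

lemma cnt_word: "\<nu> \<in> multi_le {..<d} m \<Longrightarrow> cnt d (word d m \<nu>) = \<nu>"
proof
  fix i assume \<nu>: "\<nu> \<in> multi_le {..<d} m"
  show "cnt d (word d m \<nu>) i = \<nu> i"
  proof (cases "i < d")
    case False then show ?thesis using \<nu> unfolding cnt_def multi_le_def by auto
  next
    case True
    have "length (filter (\<lambda>j. j = Suc i) (concat (map (\<lambda>k. replicate (\<nu> k) (Suc k)) [0..<d])))
        = sum_list (map (\<lambda>k. if k = i then \<nu> k else 0) [0..<d])"
      apply (simp add: filter_concat length_concat comp_def filter_replicate)
      apply (rule arg_cong[where f=sum_list])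
      apply (rule map_cong)
       apply auto
      done
    also have "\<dots> = (\<Sum>k\<in>{..<d}. if k = i then \<nu> k else 0)"
      by (subst sum_set_upt_conv_sum_list_nat[symmetric]) (simp add: atLeast0LessThan)
    also have "\<dots> = \<nu> i" using True by (simp add: sum.delta)
    finally show ?thesis unfolding cnt_def word_def using True by simp
  qed
qed

lemma finite_kron_index: "finite (kron_index d m)"
proof -
  have "kron_index d m = {js. set js \<subseteq> {..d} \<and> length js = m}" unfolding kron_index_def by auto
  then show ?thesis using finite_lists_length_eq[of "{..d}" m] by simp
qed

lemma vnorm_nonneg: "0 \<le> vnorm I x"
  unfolding vnorm_def by (simp add: sum_nonneg)

lemma vnorm_L2: "vnorm I x = L2_set x I"
  unfolding vnorm_def L2_set_def by simp

lemma abs_le_vnorm: "finite I \<Longrightarrow> i \<in> I \<Longrightarrow> \<bar>x i\<bar> \<le> vnorm I x"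
proof -
  assume "finite I" "i \<in> I"
  then have "\<bar>x i\<bar> \<le> L2_set (\<lambda>i. \<bar>x i\<bar>) I" by (rule member_le_L2_set)
  also have "L2_set (\<lambda>i. \<bar>x i\<bar>) I = L2_set x I" unfolding L2_set_def by simp
  finally show ?thesis unfolding vnorm_L2 .
qed

lemma vnorm_coord_bound:
  assumes "finite J" "\<And>j. j \<in> J \<Longrightarrow> \<bar>z j\<bar> \<le> B"
  shows "vnorm J z \<le> real (card J) * B"
proof -
  have "vnorm J z \<le> (\<Sum>j\<in>J. \<bar>z j\<bar>)" unfolding vnorm_L2 by (rule L2_set_le_sum_abs)
  also have "\<dots> \<le> real (card J) * B" using assms(2) by (rule sum_bounded_above)
  finally show ?thesis .
qed

lemma mpow_bound:
  fixes n :: nat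
  assumes I: "finite I" and l: "deg I l \<le> n"
  shows "\<bar>mpow I l x\<bar> \<le> 1 + vnorm I x ^ n"
proof -
  let ?v = "vnorm I x"
  have "\<bar>mpow I l x\<bar> = (\<Prod>i\<in>I. \<bar>x i\<bar> ^ l i)" unfolding mpow_def by (simp add: abs_prod power_abs)
  also have "\<dots> \<le> (\<Prod>i\<in>I. ?v ^ l i)"
    using I by (intro prod_mono conjI power_mono abs_le_vnorm) auto
  also have "\<dots> = ?v ^ deg I l" unfolding deg_def by (simp add: power_sum)
  also have "\<dots> \<le> 1 + ?v ^ n"
  proof (cases "?v \<le> 1")
    case True
    then have "?v ^ deg I l \<le> 1" using vnorm_nonneg by (intro power_le_one) auto
    then show ?thesis using zero_le_power[of "vnorm I x" n] vnorm_nonneg[of I x] by linarith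
  next
    case False
    then have "?v ^ deg I l \<le> ?v ^ n" using l by (intro power_increasing) auto
    then show ?thesis by linarith
  qed
  finally show ?thesis .
qed

lemma vnorm_pow_max:
  assumes I: "finite I" "I \<noteq> {}"
  shows "\<exists>i0\<in>I. vnorm I x ^ n \<le> real (card I) ^ n * \<bar>x i0\<bar> ^ n"
proof -
  obtain i0 where i0: "i0 \<in> I" "\<And>i. i \<in> I \<Longrightarrow> \<bar>x i\<bar> \<le> \<bar>x i0\<bar>"
  proof -
    let ?M = "Max ((\<lambda>i. \<bar>x i\<bar>) ` I)"
    have "?M \<in> (\<lambda>i. \<bar>x i\<bar>) ` I" using I by (intro Max_in) auto
    then obtain i0 where "i0 \<in> I" "\<bar>x i0\<bar> = ?M" by auto
    moreover have "\<And>i. i \<in> I \<Longrightarrow> \<bar>x i\<bar> \<le> ?M" using I by (intro Max_ge) auto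
    ultimately show ?thesis using that by metis
  qed
  have "vnorm I x \<le> real (card I) * \<bar>x i0\<bar>" using I i0 by (intro vnorm_coord_bound) auto
  then have "vnorm I x ^ n \<le> (real (card I) * \<bar>x i0\<bar>) ^ n"
    using vnorm_nonneg by (intro power_mono) auto
  then show ?thesis using i0 by (auto simp: power_mult_distrib)
qed

lemma integ_affine:
  fixes f g :: "real \<Rightarrow> 'a \<Rightarrow> real"
  assumes P: "prob_space M"
    and hf: "\<forall>t\<ge>0. (\<integral>\<^sup>+ s\<in>{0..t}. (\<integral>\<^sup>+ \<omega>. ennreal (f s \<omega>) \<partial>M) \<partial>lborel) < \<infinity>"
    and le: "\<And>s \<omega>. 0 \<le> s \<Longrightarrow> \<omega> \<in> space M \<Longrightarrow> g s \<omega> \<le> K * (1 + f s \<omega>)"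
    and K: "0 \<le> K" and f0: "\<And>s \<omega>. 0 \<le> f s \<omega>"
  shows "\<forall>t\<ge>0. (\<integral>\<^sup>+ s\<in>{0..t}. (\<integral>\<^sup>+ \<omega>. ennreal (g s \<omega>) \<partial>M) \<partial>lborel) < \<infinity>"
proof (intro allI impI)
  fix t :: real assume t: "0 \<le> t"
  have inner: "(\<integral>\<^sup>+ \<omega>. ennreal (g s \<omega>) \<partial>M) \<le> ennreal K + ennreal K * (\<integral>\<^sup>+ \<omega>. ennreal (f s \<omega>) \<partial>M)"
    if s: "0 \<le> s" for s
  proof -
    have "(\<integral>\<^sup>+ \<omega>. ennreal (g s \<omega>) \<partial>M) \<le> (\<integral>\<^sup>+ \<omega>. ennreal K + ennreal K * ennreal (f s \<omega>) \<partial>M)"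
    proof (rule nn_integral_mono)
      fix \<omega> assume "\<omega> \<in> space M"
      then have "g s \<omega> \<le> K + K * f s \<omega>" using le s by (simp add: algebra_simps)
      then have "ennreal (g s \<omega>) \<le> ennreal (K + K * f s \<omega>)" by (rule ennreal_leI)
      also have "\<dots> = ennreal K + ennreal K * ennreal (f s \<omega>)"
        using K f0[of s \<omega>] by (simp add: ennreal_plus ennreal_mult')
      finally show "ennreal (g s \<omega>) \<le> ennreal K + ennreal K * ennreal (f s \<omega>)" .
    qed
    also have "\<dots> \<le> (\<integral>\<^sup>+ \<omega>. ennreal K \<partial>M) + (\<integral>\<^sup>+ \<omega>. ennreal K * ennreal (f s \<omega>) \<partial>M)"
      by (rule nn_integral_add_simple_le) auto
    also have "(\<integral>\<^sup>+ \<omega>. ennreal K \<partial>M) = ennreal K"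
      using prob_space.emeasure_space_1[OF P] by simp
    also have "(\<integral>\<^sup>+ \<omega>. ennreal K * ennreal (f s \<omega>) \<partial>M) \<le> ennreal K * (\<integral>\<^sup>+ \<omega>. ennreal (f s \<omega>) \<partial>M)"
      by (rule nn_integral_cmult_le) simp
    finally show ?thesis by (simp add: add_left_mono)
  qed
  have "(\<integral>\<^sup>+ s\<in>{0..t}. (\<integral>\<^sup>+ \<omega>. ennreal (g s \<omega>) \<partial>M) \<partial>lborel)
      \<le> (\<integral>\<^sup>+ s. ennreal K * indicator {0..t} s + ennreal K * ((\<integral>\<^sup>+ \<omega>. ennreal (f s \<omega>) \<partial>M) * indicator {0..t} s) \<partial>lborel)"
  proof (rule nn_integral_mono)
    fix s :: real assume "s \<in> space lborel"
    show "(\<integral>\<^sup>+ \<omega>. ennreal (g s \<omega>) \<partial>M) * indicator {0..t} s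
        \<le> ennreal K * indicator {0..t} s + ennreal K * ((\<integral>\<^sup>+ \<omega>. ennreal (f s \<omega>) \<partial>M) * indicator {0..t} s)"
    proof (cases "s \<in> {0..t}")
      case True
      then show ?thesis using inner[of s] by simp
    qed simp
  qed
  also have "\<dots> \<le> (\<integral>\<^sup>+ s. ennreal K * indicator {0..t} s \<partial>lborel)
       + (\<integral>\<^sup>+ s. ennreal K * ((\<integral>\<^sup>+ \<omega>. ennreal (f s \<omega>) \<partial>M) * indicator {0..t} s) \<partial>lborel)"
  proof (rule nn_integral_add_simple_le)
    show "simple_function lborel (\<lambda>s. ennreal K * indicator {0..t} s)"
      by (intro simple_function_mult simple_function_indicator simple_function_const) simp
    fix s show "ennreal K * indicator {0..t} s < \<top>" by (simp split: split_indicator)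
  qed
  also have "(\<integral>\<^sup>+ s. ennreal K * indicator {0..t} s \<partial>lborel) = ennreal K * emeasure lborel {0..t}"
    by (rule nn_integral_cmult_indicator) simp
  also have "(\<integral>\<^sup>+ s. ennreal K * ((\<integral>\<^sup>+ \<omega>. ennreal (f s \<omega>) \<partial>M) * indicator {0..t} s) \<partial>lborel)
      \<le> ennreal K * (\<integral>\<^sup>+ s\<in>{0..t}. (\<integral>\<^sup>+ \<omega>. ennreal (f s \<omega>) \<partial>M) \<partial>lborel)"
    by (rule nn_integral_cmult_le) simp
  also have "ennreal K * emeasure lborel {0..t} + ennreal K * (\<integral>\<^sup>+ s\<in>{0..t}. (\<integral>\<^sup>+ \<omega>. ennreal (f s \<omega>) \<partial>M) \<partial>lborel) < \<infinity>"
    using hf t by (simp add: ennreal_mult_less_top)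
  finally show "(\<integral>\<^sup>+ s\<in>{0..t}. (\<integral>\<^sup>+ \<omega>. ennreal (g s \<omega>) \<partial>M) \<partial>lborel) < \<infinity>"
    by (simp add: add_left_mono)
qed

lemma pp1_sum:
  assumes J: "finite J"
  shows "(\<Sum>\<mu>\<in>multi_le J 1. b \<mu> s * mpow J \<mu> z) = b (\<lambda>_. 0) s + (\<Sum>k\<in>J. b (delta k) s * z k)"
proof -
  have "(\<Sum>k\<in>J. b (delta k) s * mpow J (delta k) z) = (\<Sum>k\<in>J. b (delta k) s * z k)"
    by (rule sum.cong) (auto simp: mpow_delta[OF J])
  then show ?thesis by (subst sum_multi_le_1[OF J]) simp
qed

lemma pp1_iff:
  fixes Z :: "real \<Rightarrow> 'a \<Rightarrow> 'j \<Rightarrow> real"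
  assumes rc: "rc_filtration M F" and J: "finite J"
  shows "polynomial_process M F J 1 Z \<longleftrightarrow>
    vsemimartingale M F J Z \<and>
    (\<forall>t\<ge>0. (\<integral>\<^sup>+ s\<in>{0..t}. (\<integral>\<^sup>+ \<omega>. ennreal (vnorm J (Z s \<omega>) ^ 1) \<partial>M) \<partial>lborel) < \<infinity>) \<and>
    (\<forall>j\<in>J. \<exists>a c. a \<in> borel_measurable borel \<and> locally_bounded a \<and>
        (\<forall>k\<in>J. c k \<in> borel_measurable borel \<and> locally_bounded (c k)) \<and>
        martingale M F (\<lambda>t \<omega>. Z t \<omega> j - Z 0 \<omega> j
           - (LINT s:{0..t}|lborel. a s + (\<Sum>k\<in>J. c k s * Z s \<omega> k))))"
    (is "_ \<longleftrightarrow> ?V \<and> ?I \<and> ?D")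
proof -
  let ?P = "\<forall>l\<in>multi_le J 1. \<exists>b :: ('j \<Rightarrow> nat) \<Rightarrow> real \<Rightarrow> real.
        (\<forall>\<mu>\<in>multi_le J (deg J l). b \<mu> \<in> borel_measurable borel \<and> locally_bounded (b \<mu>)) \<and>
        martingale M F (\<lambda>t \<omega>. mpow J l (Z t \<omega>) - mpow J l (Z 0 \<omega>)
            - (LINT s:{0..t}|lborel. (\<Sum>\<mu>\<in>multi_le J (deg J l). b \<mu> s * mpow J \<mu> (Z s \<omega>))))"
  have "?P \<longleftrightarrow> ?D"
  proof
    assume P: ?P
    show ?D
    proof
      fix j assume j: "j \<in> J"
      have dj: "delta j \<in> multi_le J 1" using J j by (rule delta_in_multi_le) simp
      obtain b where b: "\<forall>\<mu>\<in>multi_le J 1. b \<mu> \<in> borel_measurable borel \<and> locally_bounded (b \<mu>)"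
        and m: "martingale M F (\<lambda>t \<omega>. mpow J (delta j) (Z t \<omega>) - mpow J (delta j) (Z 0 \<omega>)
            - (LINT s:{0..t}|lborel. (\<Sum>\<mu>\<in>multi_le J 1. b \<mu> s * mpow J \<mu> (Z s \<omega>))))"
        using P[rule_format, OF dj] unfolding deg_delta[OF J j] by blast
      have A1: "b (\<lambda>_. 0) \<in> borel_measurable borel \<and> locally_bounded (b (\<lambda>_. 0))"
        using b zero_in_multi_le by blast
      have A2: "\<forall>k\<in>J. b (delta k) \<in> borel_measurable borel \<and> locally_bounded (b (delta k))"
      proof
        fix k assume "k \<in> J"
        then have "delta k \<in> multi_le J 1" by (rule delta_in_multi_le[OF J]) simp
        then show "b (delta k) \<in> borel_measurable borel \<and> locally_bounded (b (delta k))" using b by blast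
      qed
      have A3: "martingale M F (\<lambda>t \<omega>. Z t \<omega> j - Z 0 \<omega> j
           - (LINT s:{0..t}|lborel. b (\<lambda>_. 0) s + (\<Sum>k\<in>J. b (delta k) s * Z s \<omega> k)))"
        using m unfolding pp1_sum[OF J] mpow_delta[OF J j] .
      show "\<exists>a c. a \<in> borel_measurable borel \<and> locally_bounded a \<and>
        (\<forall>k\<in>J. c k \<in> borel_measurable borel \<and> locally_bounded (c k)) \<and>
        martingale M F (\<lambda>t \<omega>. Z t \<omega> j - Z 0 \<omega> j
           - (LINT s:{0..t}|lborel. a s + (\<Sum>k\<in>J. c k s * Z s \<omega> k)))"
        by (rule exI[of _ "b (\<lambda>_. 0)"], rule exI[of _ "\<lambda>k. b (delta k)"]) (use A1 A2 A3 in simp)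
    qed
  next
    assume D: ?D
    show ?P
    proof
      fix l assume l: "l \<in> multi_le J 1"
      then consider "l = (\<lambda>_. 0)" | j where "j \<in> J" "l = delta j"
        unfolding multi_le_1[OF J] by blast
      then show "\<exists>b :: ('j \<Rightarrow> nat) \<Rightarrow> real \<Rightarrow> real.
        (\<forall>\<mu>\<in>multi_le J (deg J l). b \<mu> \<in> borel_measurable borel \<and> locally_bounded (b \<mu>)) \<and>
        martingale M F (\<lambda>t \<omega>. mpow J l (Z t \<omega>) - mpow J l (Z 0 \<omega>)
            - (LINT s:{0..t}|lborel. (\<Sum>\<mu>\<in>multi_le J (deg J l). b \<mu> s * mpow J \<mu> (Z s \<omega>))))"
      proof cases
        case 1
        have "martingale M F (\<lambda>t \<omega>. mpow J l (Z t \<omega>) - mpow J l (Z 0 \<omega>)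
            - (LINT s:{0..t}|lborel. (\<Sum>\<mu>\<in>multi_le J (deg J l). (\<lambda>_ _. 0) \<mu> s * mpow J \<mu> (Z s \<omega>))))"
          using martingale_zero[OF rc] unfolding 1 by simp
        moreover have "\<forall>\<mu>\<in>multi_le J (deg J l). (\<lambda>_ _. 0::real) \<mu> \<in> borel_measurable borel \<and> locally_bounded ((\<lambda>_ _. 0::real) \<mu>)"
          by (auto simp: locally_bounded_def)
        ultimately show ?thesis by (intro exI[of _ "\<lambda>_ _. 0::real"]) simp
      next
        case 2
        obtain a c where a: "a \<in> borel_measurable borel" "locally_bounded a"
          and c: "\<forall>k\<in>J. c k \<in> borel_measurable borel \<and> locally_bounded (c k)"
          and m: "martingale M F (\<lambda>t \<omega>. Z t \<omega> j - Z 0 \<omega> j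
           - (LINT s:{0..t}|lborel. a s + (\<Sum>k\<in>J. c k s * Z s \<omega> k)))"
          using D 2 by blast
        define b where "b = (\<lambda>\<mu>. if \<mu> = (\<lambda>_. 0) then a
                 else if (\<exists>k\<in>J. \<mu> = delta k) then c (SOME k. k \<in> J \<and> \<mu> = delta k) else (\<lambda>_. 0))"
        have b0: "b (\<lambda>_. 0) = a" unfolding b_def by simp
        have bd: "b (delta k) = c k" if "k \<in> J" for k
        proof -
          have "(SOME k'. k' \<in> J \<and> delta k = delta k') = k"
            by (rule some_equality) (use that in \<open>auto dest: delta_inj\<close>)
          moreover have ex: "\<exists>k'\<in>J. delta k = delta k'" using that by blast
          ultimately show ?thesis
            unfolding b_def if_not_P[OF delta_ne_zero] if_P[OF ex] by simp
        qed
        have "\<forall>\<mu>\<in>multi_le J 1. b \<mu> \<in> borel_measurable borel \<and> locally_bounded (b \<mu>)"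
          unfolding multi_le_1[OF J] using a c b0 bd by auto
        moreover have "(\<Sum>k\<in>J. b (delta k) s * z k) = (\<Sum>k\<in>J. c k s * z k)" for s z
          by (rule sum.cong) (auto simp: bd)
        then have "martingale M F (\<lambda>t \<omega>. mpow J (delta j) (Z t \<omega>) - mpow J (delta j) (Z 0 \<omega>)
            - (LINT s:{0..t}|lborel. (\<Sum>\<mu>\<in>multi_le J 1. b \<mu> s * mpow J \<mu> (Z s \<omega>))))"
          using m unfolding pp1_sum[OF J] mpow_delta[OF J \<open>j \<in> J\<close>] b0 by simp
        ultimately show ?thesis unfolding 2 deg_delta[OF J \<open>j \<in> J\<close>] by blast
      qed
    qed
  qed
  then show ?thesis unfolding polynomial_process_def by (rule arg_cong2[where f="(\<and>)", OF refl arg_cong2[where f="(\<and>)", OF refl]])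
qed

lemma pp_vs: "polynomial_process M F I n X \<Longrightarrow> vsemimartingale M F I X"
  unfolding polynomial_process_def by blast

lemma pp_int: "polynomial_process M F I n X \<Longrightarrow>
  \<forall>t\<ge>0. (\<integral>\<^sup>+ s\<in>{0..t}. (\<integral>\<^sup>+ \<omega>. ennreal (vnorm I (X s \<omega>) ^ n) \<partial>M) \<partial>lborel) < \<infinity>"
  unfolding polynomial_process_def by blast

lemma pp_drift: "polynomial_process M F I n X \<Longrightarrow> l \<in> multi_le I n \<Longrightarrow>
  \<exists>b :: ('i \<Rightarrow> nat) \<Rightarrow> real \<Rightarrow> real.
        (\<forall>\<mu>\<in>multi_le I (deg I l). b \<mu> \<in> borel_measurable borel \<and> locally_bounded (b \<mu>)) \<and>
        martingale M F (\<lambda>t \<omega>. mpow I l (X t \<omega>) - mpow I l (X 0 \<omega>)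
            - (LINT s:{0..t}|lborel. (\<Sum>\<mu>\<in>multi_le I (deg I l). b \<mu> s * mpow I \<mu> (X s \<omega>))))"
  for X :: "real \<Rightarrow> 'a \<Rightarrow> 'i \<Rightarrow> real"
  unfolding polynomial_process_def by blast

lemma ppI:
  fixes X :: "real \<Rightarrow> 'a \<Rightarrow> 'i \<Rightarrow> real"
  assumes "vsemimartingale M F I X"
    "\<forall>t\<ge>0. (\<integral>\<^sup>+ s\<in>{0..t}. (\<integral>\<^sup>+ \<omega>. ennreal (vnorm I (X s \<omega>) ^ n) \<partial>M) \<partial>lborel) < \<infinity>"
    "\<And>l. l \<in> multi_le I n \<Longrightarrow> \<exists>b :: ('i \<Rightarrow> nat) \<Rightarrow> real \<Rightarrow> real.
        (\<forall>\<mu>\<in>multi_le I (deg I l). b \<mu> \<in> borel_measurable borel \<and> locally_bounded (b \<mu>)) \<and>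
        martingale M F (\<lambda>t \<omega>. mpow I l (X t \<omega>) - mpow I l (X 0 \<omega>)
            - (LINT s:{0..t}|lborel. (\<Sum>\<mu>\<in>multi_le I (deg I l). b \<mu> s * mpow I \<mu> (X s \<omega>))))"
  shows "polynomial_process M F I n X"
  unfolding polynomial_process_def using assms by blast

lemma PX_semimart:
  fixes X :: "real \<Rightarrow> 'a \<Rightarrow> 'i \<Rightarrow> real"
  assumes rc: "rc_filtration M F" and PX: "polynomial_process M F I n X" and I: "finite I"
    and l: "l \<in> multi_le I n"
  shows "semimartingale M F (\<lambda>t \<omega>. mpow I l (X t \<omega>))"
proof -
  obtain b where b: "\<forall>\<mu>\<in>multi_le I (deg I l). b \<mu> \<in> borel_measurable borel \<and> locally_bounded (b \<mu>)"
    and m: "martingale M F (\<lambda>t \<omega>. mpow I l (X t \<omega>) - mpow I l (X 0 \<omega>)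
            - (LINT s:{0..t}|lborel. (\<Sum>\<mu>\<in>multi_le I (deg I l). b \<mu> s * mpow I \<mu> (X s \<omega>))))"
    using pp_drift[OF PX l] by blast
  show ?thesis by (rule mpow_semimart[OF rc pp_vs[OF PX] I b m])
qed

lemma deg_pos:
  assumes "finite I" "l \<in> multi_le I n" "l \<noteq> (\<lambda>_. 0)"
  shows "1 \<le> deg I l"
proof -
  obtain i where i: "l i \<noteq> 0" using assms(3) by auto
  then have "i \<in> I" using assms(2) unfolding multi_le_def by auto
  then have "l i \<le> deg I l" unfolding deg_def using assms(1) by (intro member_le_sum) auto
  then show ?thesis using i by simp
qed

lemma mpow_single:
  assumes "finite I" "i0 \<in> I"
  shows "mpow I (\<lambda>i. if i = i0 then n else 0) x = x i0 ^ n"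
proof -
  have "mpow I (\<lambda>i. if i = i0 then n else 0) x = (\<Prod>i\<in>I. if i = i0 then x i ^ n else 1)"
    unfolding mpow_def by (intro prod.cong) auto
  also have "\<dots> = x i0 ^ n" using assms by (simp add: prod.delta)
  finally show ?thesis .
qed

lemma single_in_multi_le:
  assumes "finite I" "i0 \<in> I"
  shows "(\<lambda>i. if i = i0 then n else 0) \<in> multi_le I n"
  unfolding multi_le_def using assms by (auto simp: sum.delta)

lemma L_i_ii:
  fixes X :: "real \<Rightarrow> 'a \<Rightarrow> nat \<Rightarrow> real"
  assumes rc: "rc_filtration M F" and PX: "polynomial_process M F {..<d} n X" and m: "1 \<le> m" "m \<le> n"
  shows "polynomial_process M F (multi_le {..<d} m - {\<lambda>_. 0}) 1 (\<lambda>t \<omega> l. mpow {..<d} l (X t \<omega>))"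
proof -
  let ?I = "{..<d::nat}"
  let ?J = "multi_le {..<d} m - {\<lambda>_. 0}"
  have I: "finite ?I" by simp
  have J: "finite ?J" using finite_multi_le[OF I] by simp
  have Jn: "j \<in> multi_le ?I n" if "j \<in> ?J" for j using that multi_le_mono[OF m(2)] by auto
  have degj: "deg ?I j \<le> m" if "j \<in> ?J" for j using that deg_le by auto
  have V: "vsemimartingale M F ?J (\<lambda>t \<omega> l. mpow ?I l (X t \<omega>))"
    unfolding vsemimartingale_def
  proof
    fix j assume "j \<in> ?J"
    show "semimartingale M F (\<lambda>t \<omega>. mpow ?I j (X t \<omega>))"
      by (rule PX_semimart[OF rc PX I Jn[OF \<open>j \<in> ?J\<close>]])
  qed
  have INT: "\<forall>t\<ge>0. (\<integral>\<^sup>+ s\<in>{0..t}. (\<integral>\<^sup>+ \<omega>. ennreal (vnorm ?J (\<lambda>l. mpow ?I l (X s \<omega>)) ^ 1) \<partial>M) \<partial>lborel) < \<infinity>"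
  proof (rule integ_affine[OF rc_prob[OF rc] pp_int[OF PX]])
    fix s :: real and \<omega>
    have "vnorm ?J (\<lambda>l. mpow ?I l (X s \<omega>)) \<le> real (card ?J) * (1 + vnorm ?I (X s \<omega>) ^ n)"
    proof (rule vnorm_coord_bound[OF J])
      fix j assume "j \<in> ?J"
      then have "deg ?I j \<le> n" using degj m by fastforce
      then show "\<bar>mpow ?I j (X s \<omega>)\<bar> \<le> 1 + vnorm ?I (X s \<omega>) ^ n" by (rule mpow_bound[OF I])
    qed
    then show "vnorm ?J (\<lambda>l. mpow ?I l (X s \<omega>)) ^ 1 \<le> real (card ?J) * (1 + vnorm ?I (X s \<omega>) ^ n)"
      by simp
  qed (simp_all add: vnorm_nonneg)
  have DR: "\<exists>a c. a \<in> borel_measurable borel \<and> locally_bounded a \<and>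
        (\<forall>k\<in>?J. c k \<in> borel_measurable borel \<and> locally_bounded (c k)) \<and>
        martingale M F (\<lambda>t \<omega>. mpow ?I j (X t \<omega>) - mpow ?I j (X 0 \<omega>)
           - (LINT s:{0..t}|lborel. a s + (\<Sum>k\<in>?J. c k s * mpow ?I k (X s \<omega>))))"
    if j: "j \<in> ?J" for j
  proof -
    let ?D = "multi_le ?I (deg ?I j)"
    obtain b where b: "\<forall>\<mu>\<in>?D. b \<mu> \<in> borel_measurable borel \<and> locally_bounded (b \<mu>)"
      and mart: "martingale M F (\<lambda>t \<omega>. mpow ?I j (X t \<omega>) - mpow ?I j (X 0 \<omega>)
            - (LINT s:{0..t}|lborel. (\<Sum>\<mu>\<in>?D. b \<mu> s * mpow ?I \<mu> (X s \<omega>))))"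
      using pp_drift[OF PX Jn[OF j]] by blast
    define c where "c = (\<lambda>k s. if k \<in> ?D then b k s else 0)"
    have Dfin: "finite ?D" using finite_multi_le[OF I] .
    have D0: "(\<lambda>_. 0) \<in> ?D" by (rule zero_in_multi_le)
    have sub: "?D \<subseteq> multi_le ?I m" using degj[OF j] by (rule multi_le_mono)
    have eq: "(\<Sum>\<mu>\<in>?D. b \<mu> s * mpow ?I \<mu> x) = b (\<lambda>_. 0) s + (\<Sum>k\<in>?J. c k s * mpow ?I k x)" for s x
    proof -
      have "(\<Sum>\<mu>\<in>?D. b \<mu> s * mpow ?I \<mu> x)
          = b (\<lambda>_. 0) s * mpow ?I (\<lambda>_. 0) x + (\<Sum>\<mu>\<in>?D - {\<lambda>_. 0}. b \<mu> s * mpow ?I \<mu> x)"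
        by (rule sum.remove[OF Dfin D0])
      also have "(\<Sum>\<mu>\<in>?D - {\<lambda>_. 0}. b \<mu> s * mpow ?I \<mu> x) = (\<Sum>k\<in>?J. c k s * mpow ?I k x)"
      proof -
        have "(\<Sum>k\<in>?J. c k s * mpow ?I k x) = (\<Sum>k\<in>?J. if k \<in> ?D then b k s * mpow ?I k x else 0)"
          unfolding c_def by (intro sum.cong) auto
        also have "\<dots> = (\<Sum>k\<in>?J \<inter> ?D. b k s * mpow ?I k x)"
          by (rule sum.inter_restrict[symmetric, OF J])
        also have "?J \<inter> ?D = ?D - {\<lambda>_. 0}" using sub by auto
        finally show ?thesis by simp
      qed
      finally show ?thesis by simp
    qed
    have "martingale M F (\<lambda>t \<omega>. mpow ?I j (X t \<omega>) - mpow ?I j (X 0 \<omega>)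
           - (LINT s:{0..t}|lborel. b (\<lambda>_. 0) s + (\<Sum>k\<in>?J. c k s * mpow ?I k (X s \<omega>))))"
      using mart unfolding eq .
    moreover have "b (\<lambda>_. 0) \<in> borel_measurable borel \<and> locally_bounded (b (\<lambda>_. 0))" using b D0 by blast
    moreover have "\<forall>k\<in>?J. c k \<in> borel_measurable borel \<and> locally_bounded (c k)"
    proof
      fix k show "c k \<in> borel_measurable borel \<and> locally_bounded (c k)"
      proof (cases "k \<in> ?D")
        case True
        then have "c k = b k" unfolding c_def by auto
        then show ?thesis using b True by simp
      next
        case False
        then have "c k = (\<lambda>_. 0)" unfolding c_def by auto
        then show ?thesis by (simp add: lb_const)
      qed
    qed
    ultimately show ?thesis by (intro exI[of _ "b (\<lambda>_. 0)"] exI[of _ c]) auto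
  qed
  show ?thesis
    unfolding pp1_iff[OF rc J] using V INT DR by simp
qed

lemma L_ii_i:
  fixes X :: "real \<Rightarrow> 'a \<Rightarrow> nat \<Rightarrow> real"
  assumes rc: "rc_filtration M F" and vs: "vsemimartingale M F {..<d} X" and n: "1 \<le> n"
    and H: "\<forall>m\<in>{1..n}. polynomial_process M F (multi_le {..<d} m - {\<lambda>_. 0}) 1 (\<lambda>t \<omega> l. mpow {..<d} l (X t \<omega>))"
  shows "polynomial_process M F {..<d} n X"
proof (rule ppI[OF vs])
  let ?I = "{..<d::nat}"
  let ?J = "\<lambda>m. multi_le {..<d} m - {\<lambda>_. 0}"
  have I: "finite ?I" by simp
  have J: "finite (?J m)" for m using finite_multi_le[OF I] by simp
  have Hm: "vsemimartingale M F (?J m) (\<lambda>t \<omega> l. mpow ?I l (X t \<omega>)) \<and>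
    (\<forall>t\<ge>0. (\<integral>\<^sup>+ s\<in>{0..t}. (\<integral>\<^sup>+ \<omega>. ennreal (vnorm (?J m) (\<lambda>l. mpow ?I l (X s \<omega>)) ^ 1) \<partial>M) \<partial>lborel) < \<infinity>) \<and>
    (\<forall>j\<in>?J m. \<exists>a c. a \<in> borel_measurable borel \<and> locally_bounded a \<and>
        (\<forall>k\<in>?J m. c k \<in> borel_measurable borel \<and> locally_bounded (c k)) \<and>
        martingale M F (\<lambda>t \<omega>. mpow ?I j (X t \<omega>) - mpow ?I j (X 0 \<omega>)
           - (LINT s:{0..t}|lborel. a s + (\<Sum>k\<in>?J m. c k s * mpow ?I k (X s \<omega>)))))"
    if "m \<in> {1..n}" for m
    using H that unfolding pp1_iff[OF rc J] by simp
  show "\<forall>t\<ge>0. (\<integral>\<^sup>+ s\<in>{0..t}. (\<integral>\<^sup>+ \<omega>. ennreal (vnorm ?I (X s \<omega>) ^ n) \<partial>M) \<partial>lborel) < \<infinity>"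
  proof (rule integ_lin)
    show "\<forall>t\<ge>0. (\<integral>\<^sup>+ s\<in>{0..t}. (\<integral>\<^sup>+ \<omega>. ennreal (vnorm (?J n) (\<lambda>l. mpow ?I l (X s \<omega>)) ^ 1) \<partial>M) \<partial>lborel) < \<infinity>"
      using Hm[of n] n by auto
    show "0 \<le> real (card ?I) ^ n" by simp
    fix s :: real and \<omega>
    show "vnorm ?I (X s \<omega>) ^ n \<le> real (card ?I) ^ n * vnorm (?J n) (\<lambda>l. mpow ?I l (X s \<omega>)) ^ 1"
    proof (cases "d = 0")
      case True
      then show ?thesis using n by (simp add: vnorm_def power_0_left)
    next
      case False
      then obtain i0 where i0: "i0 \<in> ?I" and le: "vnorm ?I (X s \<omega>) ^ n \<le> real (card ?I) ^ n * \<bar>X s \<omega> i0\<bar> ^ n"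
        using vnorm_pow_max[OF I, of "X s \<omega>" n] by auto
      let ?j = "\<lambda>i. if i = i0 then n else 0"
      have j: "?j \<in> ?J n" using single_in_multi_le[OF I i0, of n] n by (auto dest: fun_cong[of _ _ i0])
      have "\<bar>X s \<omega> i0\<bar> ^ n = \<bar>mpow ?I ?j (X s \<omega>)\<bar>" by (simp add: mpow_single[OF I i0] power_abs)
      also have "\<dots> \<le> vnorm (?J n) (\<lambda>l. mpow ?I l (X s \<omega>))" by (rule abs_le_vnorm[OF J j])
      finally have "\<bar>X s \<omega> i0\<bar> ^ n \<le> vnorm (?J n) (\<lambda>l. mpow ?I l (X s \<omega>))" .
      then have "real (card ?I) ^ n * \<bar>X s \<omega> i0\<bar> ^ n \<le> real (card ?I) ^ n * vnorm (?J n) (\<lambda>l. mpow ?I l (X s \<omega>))"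
        by (intro mult_left_mono) auto
      then show ?thesis using le by simp
    qed
  qed
  fix l assume l: "l \<in> multi_le ?I n"
  show "\<exists>b :: (nat \<Rightarrow> nat) \<Rightarrow> real \<Rightarrow> real.
        (\<forall>\<mu>\<in>multi_le ?I (deg ?I l). b \<mu> \<in> borel_measurable borel \<and> locally_bounded (b \<mu>)) \<and>
        martingale M F (\<lambda>t \<omega>. mpow ?I l (X t \<omega>) - mpow ?I l (X 0 \<omega>)
            - (LINT s:{0..t}|lborel. (\<Sum>\<mu>\<in>multi_le ?I (deg ?I l). b \<mu> s * mpow ?I \<mu> (X s \<omega>))))"
  proof (cases "l = (\<lambda>_. 0)")
    case True
    have "martingale M F (\<lambda>t \<omega>. mpow ?I l (X t \<omega>) - mpow ?I l (X 0 \<omega>)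
            - (LINT s:{0..t}|lborel. (\<Sum>\<mu>\<in>multi_le ?I (deg ?I l). (\<lambda>_ _. 0) \<mu> s * mpow ?I \<mu> (X s \<omega>))))"
      using martingale_zero[OF rc] unfolding True by simp
    then show ?thesis by (intro exI[of _ "\<lambda>_ _. 0::real"]) (simp add: lb_const)
  next
    case False
    define m where "m = deg ?I l"
    have m: "m \<in> {1..n}" using deg_pos[OF I l False] deg_le[OF l] unfolding m_def by auto
    have lJ: "l \<in> ?J m" using in_multi_le_deg[OF l] False unfolding m_def by auto
    obtain a c where a: "a \<in> borel_measurable borel" "locally_bounded a"
      and c: "\<forall>k\<in>?J m. c k \<in> borel_measurable borel \<and> locally_bounded (c k)"
      and mart: "martingale M F (\<lambda>t \<omega>. mpow ?I l (X t \<omega>) - mpow ?I l (X 0 \<omega>)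
           - (LINT s:{0..t}|lborel. a s + (\<Sum>k\<in>?J m. c k s * mpow ?I k (X s \<omega>))))"
      using Hm[OF m] lJ by blast
    define b where "b = (\<lambda>\<mu>. if \<mu> = (\<lambda>_. 0) then a else c \<mu>)"
    have eq: "(\<Sum>\<mu>\<in>multi_le ?I m. b \<mu> s * mpow ?I \<mu> x) = a s + (\<Sum>k\<in>?J m. c k s * mpow ?I k x)" for s x
    proof -
      have "(\<Sum>\<mu>\<in>multi_le ?I m. b \<mu> s * mpow ?I \<mu> x)
          = b (\<lambda>_. 0) s * mpow ?I (\<lambda>_. 0) x + (\<Sum>\<mu>\<in>?J m. b \<mu> s * mpow ?I \<mu> x)"
        by (rule sum.remove[OF finite_multi_le[OF I] zero_in_multi_le])
      also have "(\<Sum>\<mu>\<in>?J m. b \<mu> s * mpow ?I \<mu> x) = (\<Sum>k\<in>?J m. c k s * mpow ?I k x)"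
        unfolding b_def by (intro sum.cong) auto
      finally show ?thesis unfolding b_def by simp
    qed
    have "martingale M F (\<lambda>t \<omega>. mpow ?I l (X t \<omega>) - mpow ?I l (X 0 \<omega>)
            - (LINT s:{0..t}|lborel. (\<Sum>\<mu>\<in>multi_le ?I m. b \<mu> s * mpow ?I \<mu> (X s \<omega>))))"
      unfolding eq by (rule mart)
    moreover have "\<forall>\<mu>\<in>multi_le ?I m. b \<mu> \<in> borel_measurable borel \<and> locally_bounded (b \<mu>)"
      unfolding b_def using a c by auto
    ultimately show ?thesis unfolding m_def by blast
  qed
qed

lemma kron_eq:
  "js \<in> kron_index d m \<Longrightarrow> kron_pow (one_ext x) js = mpow {..<d} (cnt d js) x"
  unfolding kron_index_def by (rule kron_mpow) auto

lemma cnt_in: "js \<in> kron_index d m \<Longrightarrow> cnt d js \<in> multi_le {..<d} m"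
  unfolding kron_index_def by (rule cnt_multi_le) auto

lemma L_i_iii:
  fixes X :: "real \<Rightarrow> 'a \<Rightarrow> nat \<Rightarrow> real"
  assumes rc: "rc_filtration M F" and PX: "polynomial_process M F {..<d} n X" and m: "1 \<le> m" "m \<le> n"
  shows "polynomial_process M F (kron_index d m) 1 (\<lambda>t \<omega>. kron_pow (one_ext (X t \<omega>)))"
proof -
  let ?I = "{..<d::nat}"
  let ?K = "kron_index d m"
  have I: "finite ?I" by simp
  have K: "finite ?K" by (rule finite_kron_index)
  have cn: "cnt d js \<in> multi_le ?I n" if "js \<in> ?K" for js
    using cnt_in[OF that] multi_le_mono[OF m(2)] by auto
  have V: "vsemimartingale M F ?K (\<lambda>t \<omega>. kron_pow (one_ext (X t \<omega>)))"
    unfolding vsemimartingale_def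
  proof
    fix js assume js: "js \<in> ?K"
    have "(\<lambda>t \<omega>. kron_pow (one_ext (X t \<omega>)) js) = (\<lambda>t \<omega>. mpow ?I (cnt d js) (X t \<omega>))"
      using kron_eq[OF js] by simp
    then show "semimartingale M F (\<lambda>t \<omega>. kron_pow (one_ext (X t \<omega>)) js)"
      using PX_semimart[OF rc PX I cn[OF js]] by simp
  qed
  have INT: "\<forall>t\<ge>0. (\<integral>\<^sup>+ s\<in>{0..t}. (\<integral>\<^sup>+ \<omega>. ennreal (vnorm ?K (kron_pow (one_ext (X s \<omega>))) ^ 1) \<partial>M) \<partial>lborel) < \<infinity>"
  proof (rule integ_affine[OF rc_prob[OF rc] pp_int[OF PX]])
    fix s :: real and \<omega>
    have "vnorm ?K (kron_pow (one_ext (X s \<omega>))) \<le> real (card ?K) * (1 + vnorm ?I (X s \<omega>) ^ n)"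
    proof (rule vnorm_coord_bound[OF K])
      fix js assume js: "js \<in> ?K"
      have "deg ?I (cnt d js) \<le> n" using deg_le[OF cn[OF js]] .
      then show "\<bar>kron_pow (one_ext (X s \<omega>)) js\<bar> \<le> 1 + vnorm ?I (X s \<omega>) ^ n"
        unfolding kron_eq[OF js] by (rule mpow_bound[OF I])
    qed
    then show "vnorm ?K (kron_pow (one_ext (X s \<omega>))) ^ 1 \<le> real (card ?K) * (1 + vnorm ?I (X s \<omega>) ^ n)"
      by simp
  qed (simp_all add: vnorm_nonneg)
  have DR: "\<exists>a c. a \<in> borel_measurable borel \<and> locally_bounded a \<and>
        (\<forall>k\<in>?K. c k \<in> borel_measurable borel \<and> locally_bounded (c k)) \<and>
        martingale M F (\<lambda>t \<omega>. kron_pow (one_ext (X t \<omega>)) js - kron_pow (one_ext (X 0 \<omega>)) js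
           - (LINT s:{0..t}|lborel. a s + (\<Sum>k\<in>?K. c k s * kron_pow (one_ext (X s \<omega>)) k)))"
    if js: "js \<in> ?K" for js
  proof -
    let ?l = "cnt d js"
    let ?D = "multi_le ?I (deg ?I ?l)"
    let ?W = "word d m ` ?D"
    obtain b where b: "\<forall>\<mu>\<in>?D. b \<mu> \<in> borel_measurable borel \<and> locally_bounded (b \<mu>)"
      and mart: "martingale M F (\<lambda>t \<omega>. mpow ?I ?l (X t \<omega>) - mpow ?I ?l (X 0 \<omega>)
            - (LINT s:{0..t}|lborel. (\<Sum>\<mu>\<in>?D. b \<mu> s * mpow ?I \<mu> (X s \<omega>))))"
      using pp_drift[OF PX cn[OF js]] by blast
    define c where "c = (\<lambda>k s. if k \<in> ?W then b (cnt d k) s else 0)"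
    have Dfin: "finite ?D" using finite_multi_le[OF I] .
    have sub: "?D \<subseteq> multi_le ?I m" using deg_le[OF cnt_in[OF js]] by (rule multi_le_mono)
    have cw: "cnt d (word d m \<mu>) = \<mu>" if "\<mu> \<in> ?D" for \<mu> using sub that by (intro cnt_word) auto
    have inj: "inj_on (word d m) ?D"
    proof (rule inj_onI)
      fix x y assume "x \<in> ?D" "y \<in> ?D" "word d m x = word d m y"
      then show "x = y" using cw by metis
    qed
    have WK: "?W \<subseteq> ?K" using sub word_kron_index by auto
    have eq: "(\<Sum>\<mu>\<in>?D. b \<mu> s * mpow ?I \<mu> x) = 0 + (\<Sum>k\<in>?K. c k s * kron_pow (one_ext x) k)" for s x
    proof -
      have "(\<Sum>k\<in>?K. c k s * kron_pow (one_ext x) k)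
          = (\<Sum>k\<in>?K. if k \<in> ?W then b (cnt d k) s * mpow ?I (cnt d k) x else 0)"
        unfolding c_def by (intro sum.cong) (auto simp: kron_eq)
      also have "\<dots> = (\<Sum>k\<in>?K \<inter> ?W. b (cnt d k) s * mpow ?I (cnt d k) x)"
        by (rule sum.inter_restrict[symmetric, OF K])
      also have "?K \<inter> ?W = ?W" using WK by auto
      also have "(\<Sum>k\<in>?W. b (cnt d k) s * mpow ?I (cnt d k) x)
          = (\<Sum>\<mu>\<in>?D. b (cnt d (word d m \<mu>)) s * mpow ?I (cnt d (word d m \<mu>)) x)"
        by (rule sum.reindex[OF inj, unfolded comp_def])
      also have "\<dots> = (\<Sum>\<mu>\<in>?D. b \<mu> s * mpow ?I \<mu> x)"
        by (intro sum.cong) (auto simp: cw)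
      finally show ?thesis by simp
    qed
    have "martingale M F (\<lambda>t \<omega>. kron_pow (one_ext (X t \<omega>)) js - kron_pow (one_ext (X 0 \<omega>)) js
           - (LINT s:{0..t}|lborel. 0 + (\<Sum>k\<in>?K. c k s * kron_pow (one_ext (X s \<omega>)) k)))"
      using mart unfolding eq kron_eq[OF js] .
    moreover have "\<forall>k\<in>?K. c k \<in> borel_measurable borel \<and> locally_bounded (c k)"
    proof
      fix k show "c k \<in> borel_measurable borel \<and> locally_bounded (c k)"
      proof (cases "k \<in> ?W")
        case True
        then obtain \<mu> where \<mu>: "\<mu> \<in> ?D" "k = word d m \<mu>" by blast
        then have "c k = b \<mu>" unfolding c_def using True cw by auto
        then show ?thesis using b \<mu> by simp
      next
        case False
        then have "c k = (\<lambda>_. 0)" unfolding c_def by auto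
        then show ?thesis by (simp add: lb_const)
      qed
    qed
    ultimately show ?thesis by (intro exI[of _ "\<lambda>_. 0::real"] exI[of _ c]) (auto simp: lb_const)
  qed
  show ?thesis
    unfolding pp1_iff[OF rc K] using V INT DR by simp
qed

lemma L_iii_i:
  fixes X :: "real \<Rightarrow> 'a \<Rightarrow> nat \<Rightarrow> real"
  assumes rc: "rc_filtration M F" and vs: "vsemimartingale M F {..<d} X" and n: "1 \<le> n"
    and H: "\<forall>m\<in>{1..n}. polynomial_process M F (kron_index d m) 1 (\<lambda>t \<omega>. kron_pow (one_ext (X t \<omega>)))"
  shows "polynomial_process M F {..<d} n X"
proof (rule ppI[OF vs])
  let ?I = "{..<d::nat}"
  let ?K = "\<lambda>m. kron_index d m"
  have I: "finite ?I" by simp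
  have K: "finite (?K m)" for m by (rule finite_kron_index)
  have Hm: "vsemimartingale M F (?K m) (\<lambda>t \<omega>. kron_pow (one_ext (X t \<omega>))) \<and>
    (\<forall>t\<ge>0. (\<integral>\<^sup>+ s\<in>{0..t}. (\<integral>\<^sup>+ \<omega>. ennreal (vnorm (?K m) (kron_pow (one_ext (X s \<omega>))) ^ 1) \<partial>M) \<partial>lborel) < \<infinity>) \<and>
    (\<forall>j\<in>?K m. \<exists>a c. a \<in> borel_measurable borel \<and> locally_bounded a \<and>
        (\<forall>k\<in>?K m. c k \<in> borel_measurable borel \<and> locally_bounded (c k)) \<and>
        martingale M F (\<lambda>t \<omega>. kron_pow (one_ext (X t \<omega>)) j - kron_pow (one_ext (X 0 \<omega>)) j
           - (LINT s:{0..t}|lborel. a s + (\<Sum>k\<in>?K m. c k s * kron_pow (one_ext (X s \<omega>)) k))))"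
    if "m \<in> {1..n}" for m
    using H that unfolding pp1_iff[OF rc K] by simp
  show "\<forall>t\<ge>0. (\<integral>\<^sup>+ s\<in>{0..t}. (\<integral>\<^sup>+ \<omega>. ennreal (vnorm ?I (X s \<omega>) ^ n) \<partial>M) \<partial>lborel) < \<infinity>"
  proof (rule integ_lin)
    show "\<forall>t\<ge>0. (\<integral>\<^sup>+ s\<in>{0..t}. (\<integral>\<^sup>+ \<omega>. ennreal (vnorm (?K n) (kron_pow (one_ext (X s \<omega>))) ^ 1) \<partial>M) \<partial>lborel) < \<infinity>"
      using Hm[of n] n by auto
    show "0 \<le> real (card ?I) ^ n" by simp
    fix s :: real and \<omega>
    show "vnorm ?I (X s \<omega>) ^ n \<le> real (card ?I) ^ n * vnorm (?K n) (kron_pow (one_ext (X s \<omega>))) ^ 1"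
    proof (cases "d = 0")
      case True
      then show ?thesis using n by (simp add: vnorm_def power_0_left)
    next
      case False
      then obtain i0 where i0: "i0 \<in> ?I" and le: "vnorm ?I (X s \<omega>) ^ n \<le> real (card ?I) ^ n * \<bar>X s \<omega> i0\<bar> ^ n"
        using vnorm_pow_max[OF I, of "X s \<omega>" n] by auto
      let ?j = "replicate n (Suc i0)"
      have j: "?j \<in> ?K n" using i0 unfolding kron_index_def by auto
      have "\<bar>X s \<omega> i0\<bar> ^ n = \<bar>kron_pow (one_ext (X s \<omega>)) ?j\<bar>"
        by (simp add: kron_pow_def one_ext_def power_abs)
      also have "\<dots> \<le> vnorm (?K n) (kron_pow (one_ext (X s \<omega>)))" by (rule abs_le_vnorm[OF K j])
      finally have "\<bar>X s \<omega> i0\<bar> ^ n \<le> vnorm (?K n) (kron_pow (one_ext (X s \<omega>)))" .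
      then have "real (card ?I) ^ n * \<bar>X s \<omega> i0\<bar> ^ n \<le> real (card ?I) ^ n * vnorm (?K n) (kron_pow (one_ext (X s \<omega>)))"
        by (intro mult_left_mono) auto
      then show ?thesis using le by simp
    qed
  qed
  fix l assume l: "l \<in> multi_le ?I n"
  show "\<exists>b :: (nat \<Rightarrow> nat) \<Rightarrow> real \<Rightarrow> real.
        (\<forall>\<mu>\<in>multi_le ?I (deg ?I l). b \<mu> \<in> borel_measurable borel \<and> locally_bounded (b \<mu>)) \<and>
        martingale M F (\<lambda>t \<omega>. mpow ?I l (X t \<omega>) - mpow ?I l (X 0 \<omega>)
            - (LINT s:{0..t}|lborel. (\<Sum>\<mu>\<in>multi_le ?I (deg ?I l). b \<mu> s * mpow ?I \<mu> (X s \<omega>))))"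
  proof (cases "l = (\<lambda>_. 0)")
    case True
    have "martingale M F (\<lambda>t \<omega>. mpow ?I l (X t \<omega>) - mpow ?I l (X 0 \<omega>)
            - (LINT s:{0..t}|lborel. (\<Sum>\<mu>\<in>multi_le ?I (deg ?I l). (\<lambda>_ _. 0) \<mu> s * mpow ?I \<mu> (X s \<omega>))))"
      using martingale_zero[OF rc] unfolding True by simp
    then show ?thesis by (intro exI[of _ "\<lambda>_ _. 0::real"]) (simp add: lb_const)
  next
    case False
    define m where "m = deg ?I l"
    have m: "m \<in> {1..n}" using deg_pos[OF I l False] deg_le[OF l] unfolding m_def by auto
    have lm: "l \<in> multi_le ?I m" using in_multi_le_deg[OF l] unfolding m_def .
    let ?js = "word d m l"
    have js: "?js \<in> ?K m" by (rule word_kron_index[OF lm])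
    have kl: "kron_pow (one_ext x) ?js = mpow ?I l x" for x
      using kron_eq[OF js] cnt_word[OF lm] by simp
    obtain a c where a: "a \<in> borel_measurable borel" "locally_bounded a"
      and c: "\<forall>k\<in>?K m. c k \<in> borel_measurable borel \<and> locally_bounded (c k)"
      and mart: "martingale M F (\<lambda>t \<omega>. kron_pow (one_ext (X t \<omega>)) ?js - kron_pow (one_ext (X 0 \<omega>)) ?js
           - (LINT s:{0..t}|lborel. a s + (\<Sum>k\<in>?K m. c k s * kron_pow (one_ext (X s \<omega>)) k)))"
      using Hm[OF m] js by blast
    define b where "b = (\<lambda>\<mu> s. (if \<mu> = (\<lambda>_. 0) then a s else 0) + (\<Sum>k\<in>{k \<in> ?K m. cnt d k = \<mu>}. c k s))"
    have eq: "(\<Sum>\<mu>\<in>multi_le ?I m. b \<mu> s * mpow ?I \<mu> x) = a s + (\<Sum>k\<in>?K m. c k s * kron_pow (one_ext x) k)" for s x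
    proof -
      have "(\<Sum>\<mu>\<in>multi_le ?I m. b \<mu> s * mpow ?I \<mu> x)
          = (\<Sum>\<mu>\<in>multi_le ?I m. (if \<mu> = (\<lambda>_. 0) then a s else 0) * mpow ?I \<mu> x)
            + (\<Sum>\<mu>\<in>multi_le ?I m. (\<Sum>k\<in>{k \<in> ?K m. cnt d k = \<mu>}. c k s) * mpow ?I \<mu> x)"
        unfolding b_def by (simp add: distrib_right sum.distrib)
      also have "(\<Sum>\<mu>\<in>multi_le ?I m. (if \<mu> = (\<lambda>_. 0) then a s else 0) * mpow ?I \<mu> x) = a s"
      proof -
        have "(\<Sum>\<mu>\<in>multi_le ?I m. (if \<mu> = (\<lambda>_. 0) then a s else 0) * mpow ?I \<mu> x)
            = (\<Sum>\<mu>\<in>multi_le ?I m. if \<mu> = (\<lambda>_. 0) then a s else 0)"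
          by (intro sum.cong) auto
        also have "\<dots> = a s" using finite_multi_le[OF I, of m] zero_in_multi_le[of ?I m]
          by (simp add: sum.delta)
        finally show ?thesis .
      qed
      also have "(\<Sum>\<mu>\<in>multi_le ?I m. (\<Sum>k\<in>{k \<in> ?K m. cnt d k = \<mu>}. c k s) * mpow ?I \<mu> x)
          = (\<Sum>\<mu>\<in>multi_le ?I m. (\<Sum>k\<in>{k \<in> ?K m. cnt d k = \<mu>}. c k s * mpow ?I (cnt d k) x))"
        by (intro sum.cong refl) (auto simp: sum_distrib_right)
      also have "\<dots> = (\<Sum>k\<in>?K m. c k s * mpow ?I (cnt d k) x)"
        by (rule sum.group[OF K finite_multi_le[OF I]]) (auto intro: cnt_in)
      also have "\<dots> = (\<Sum>k\<in>?K m. c k s * kron_pow (one_ext x) k)"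
        by (intro sum.cong) (auto simp: kron_eq)
      finally show ?thesis .
    qed
    have "martingale M F (\<lambda>t \<omega>. mpow ?I l (X t \<omega>) - mpow ?I l (X 0 \<omega>)
            - (LINT s:{0..t}|lborel. (\<Sum>\<mu>\<in>multi_le ?I m. b \<mu> s * mpow ?I \<mu> (X s \<omega>))))"
      unfolding eq using mart unfolding kl .
    moreover have "\<forall>\<mu>\<in>multi_le ?I m. b \<mu> \<in> borel_measurable borel \<and> locally_bounded (b \<mu>)"
    proof
      fix \<mu>
      have cc: "\<forall>k\<in>{k \<in> ?K m. cnt d k = \<mu>}. c k \<in> borel_measurable borel \<and> locally_bounded (c k)"
        using c by auto
      have "(\<lambda>s. if \<mu> = (\<lambda>_. 0) then a s else 0) \<in> borel_measurable borel"
        using a by (cases "\<mu> = (\<lambda>_. 0)") auto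
      moreover have "locally_bounded (\<lambda>s. if \<mu> = (\<lambda>_. 0) then a s else 0)"
        using a by (cases "\<mu> = (\<lambda>_. 0)") (auto simp: lb_const)
      moreover have "(\<lambda>s. \<Sum>k\<in>{k \<in> ?K m. cnt d k = \<mu>}. c k s) \<in> borel_measurable borel"
        using cc by (intro borel_measurable_sum) auto
      moreover have "locally_bounded (\<lambda>s. \<Sum>k\<in>{k \<in> ?K m. cnt d k = \<mu>}. c k s)"
        using cc by (intro lb_sum) auto
      ultimately show "b \<mu> \<in> borel_measurable borel \<and> locally_bounded (b \<mu>)"
        unfolding b_def by (auto intro: lb_add borel_measurable_add)
    qed
    ultimately show ?thesis unfolding m_def by blast
  qed
qed

theorem lemma2p4:
  fixes M :: "'a measure" and F :: "real \<Rightarrow> 'a measure"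
    and X :: "real \<Rightarrow> 'a \<Rightarrow> nat \<Rightarrow> real" and d n :: nat
  assumes "rc_filtration M F"
    and "vsemimartingale M F {..<d} X"
    and "1 \<le> n"
  shows "(polynomial_process M F {..<d} n X
            \<longleftrightarrow> (\<forall>m\<in>{1..n}. polynomial_process M F (multi_le {..<d} m - {\<lambda>_. 0}) 1
                                 (\<lambda>t \<omega> l. mpow {..<d} l (X t \<omega>))))
       \<and> (polynomial_process M F {..<d} n X
            \<longleftrightarrow> (\<forall>m\<in>{1..n}. polynomial_process M F (kron_index d m) 1
                                 (\<lambda>t \<omega>. kron_pow (one_ext (X t \<omega>)))))"
proof -
  note rc = assms(1) and vs = assms(2) and n = assms(3)
  have A1: "polynomial_process M F {..<d} n X
            \<longleftrightarrow> (\<forall>m\<in>{1..n}. polynomial_process M F (multi_le {..<d} m - {\<lambda>_. 0}) 1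
                                 (\<lambda>t \<omega> l. mpow {..<d} l (X t \<omega>)))"
  proof
    assume PX: "polynomial_process M F {..<d} n X"
    show "\<forall>m\<in>{1..n}. polynomial_process M F (multi_le {..<d} m - {\<lambda>_. 0}) 1
                                 (\<lambda>t \<omega> l. mpow {..<d} l (X t \<omega>))"
    proof
      fix m assume "m \<in> {1..n}"
      then show "polynomial_process M F (multi_le {..<d} m - {\<lambda>_. 0}) 1 (\<lambda>t \<omega> l. mpow {..<d} l (X t \<omega>))"
        using L_i_ii[OF rc PX] by auto
    qed
  next
    assume H: "\<forall>m\<in>{1..n}. polynomial_process M F (multi_le {..<d} m - {\<lambda>_. 0}) 1
                                 (\<lambda>t \<omega> l. mpow {..<d} l (X t \<omega>))"
    show "polynomial_process M F {..<d} n X" by (rule L_ii_i[OF rc vs n H])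
  qed
  have A2: "polynomial_process M F {..<d} n X
            \<longleftrightarrow> (\<forall>m\<in>{1..n}. polynomial_process M F (kron_index d m) 1
                                 (\<lambda>t \<omega>. kron_pow (one_ext (X t \<omega>))))"
  proof
    assume PX: "polynomial_process M F {..<d} n X"
    show "\<forall>m\<in>{1..n}. polynomial_process M F (kron_index d m) 1 (\<lambda>t \<omega>. kron_pow (one_ext (X t \<omega>)))"
    proof
      fix m assume "m \<in> {1..n}"
      then show "polynomial_process M F (kron_index d m) 1 (\<lambda>t \<omega>. kron_pow (one_ext (X t \<omega>)))"
        using L_i_iii[OF rc PX] by auto
    qed
  next
    assume H: "\<forall>m\<in>{1..n}. polynomial_process M F (kron_index d m) 1 (\<lambda>t \<omega>. kron_pow (one_ext (X t \<omega>)))"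
    show "polynomial_process M F {..<d} n X" by (rule L_iii_i[OF rc vs n H])
  qed
  show ?thesis using A1 A2 by (rule conjI)
qed

end
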